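(* Let $W$ be an sc-Banach space and let $g:\mathcal O(([0,\infty)^k\oplus\mathbb R^{n-k})\oplus W,0)\to\mathbb R^N\oplus W$ be an sc-smooth germ such that, with $P:\mathbb R^N\oplus W\to W$ the canonical projection, the germ $P\circ(g-g(0,0)):\mathcal O(([0,\infty)^k\oplus\mathbb R^{n-k})\oplus W,0)\to W$ is an $\mathrm{sc}^0$-contraction germ. Then $g$ is linearized Fredholm at $0$ and its Fredholm index is $\operatorname{Ind}(g,0)=n-N$.
   Context: An sc-Banach space is a Banach space $E$ with a nested sequence of Banach spaces $E=E_0\supset E_1\supset\cdots$, the inclusions $E_n\to E_m$ ($m<n$) compact and $E_\infty=\bigcap E_m$ dense in each $E_m$; finite-dimensional spaces carry the constant structure, direct sums the levelwise one; $F^1$ denotes $F_1$ with levels $(F^1)_m=F_{m+1}$. A germ of neighborhoods $\mathcal O(C,0)$ is a decreasing sequence $U_0\supset U_1\supset\cdots$ with $U_m$ relatively open neighborhood of $0$ in $C\cap E_m$. An $\mathrm{sc}^0$-germ $g:\mathcal O(C,0)\to F$ is a continuous $g:U_0\to F_0$ with $g(U_m)\subset F_m$ and $g:U_m\to F_m$ continuous for all $m$ (an "$\mathrm{sc}^0$-germ into $(F,0)$" additionally has $g(0)=0$). It is $\mathrm{sc}^1$ if for $x\in U_1$ there is $Dg(x)\in\mathcal L(E_0,F_0)$ with $\|g(x+h)-g(x)-Dg(x)h\|_0/\|h\|_1\to0$ as $\|h\|_1\to0$ and $Tg(x,h)=(g(x),Dg(x)h)$ maps $U_{m+1}\oplus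 E_m$ into $F_{m+1}\oplus F_m$ and is an $\mathrm{sc}^0$-germ; $\mathrm{sc}^k$ inductively ($Tg$ of class $\mathrm{sc}^{k-1}$); sc-smooth means $\mathrm{sc}^k$ for all $k$ (then $g(0)\in F_\infty$). An $\mathrm{sc}^+$-germ is an $\mathrm{sc}$-smooth germ $s$ with $s(U_m)\subset F_{m+1}$ which is sc-smooth as a germ into $F^1$. An sc-operator is a bounded linear $T:E\to F$ mapping $E_m$ continuously into $F_m$ for all $m$. It is sc-Fredholm if there are levelwise topological splittings $E=K\oplus X$, $F=Y\oplus C$ into closed subspaces compatible with all levels such that $K=\ker T$ and $C$ are finite-dimensional, $Y=T(X)$ and $T:X\to Y$ is an sc-isomorphism; its index is $\dim K-\dim C$. The germ $g$ is linearized Fredholm at $0$ if for an $\mathrm{sc}^+$-germ $s$ with $s(0)=g(0)$ the linearization $D(g-s)(0)$ is an sc-Fredholm operator; its index $\operatorname{Ind}(g,0)$ is the Fredholm index of $D(g-s)(0)$ (this does not depend on the choice of $s$). An $\mathrm{sc}^0$-contraction germ is an $\mathrm{sc}^0$-germ $f:\mathcal O(V\oplus W,0)\to(W,0)$, $V$ a finite-dimensional partial quadrant, of the form $f(v,w)=w-B(v,w)$ with: for every $m$ and $0<\varepsilon<1$, $\|B(v,w)-B(v,w')\|_m\le\varepsilon\|w-w'\|_m$ for $(v,w),(v,w')$ sufficiently close to $(0,0)$ in $V\oplus W_m$. *)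

theory Defs
  imports "HOL-Analysis.Analysis" "HOL-Library.Function_Algebras"
begin

instantiation "fun" :: (type, real_vector) real_vector
begin
definition scaleR_fun :: "real \<Rightarrow> ('a \<Rightarrow> 'b) \<Rightarrow> 'a \<Rightarrow> 'b"
  where "scaleR_fun c f = (\<lambda>x. c *\<^sub>R f x)"
instance
  by standard (auto simp: scaleR_fun_def fun_eq_iff scaleR_add_right scaleR_add_left)
end

section \<open>Scales: nested level sets with level norms\<close>

type_synonym 'a scale = "(nat \<Rightarrow> 'a set) \<times> (nat \<Rightarrow> 'a \<Rightarrow> real)"

definition lev :: "'a scale \<Rightarrow> nat \<Rightarrow> 'a set" where "lev S = fst S"
definition nrm :: "'a scale \<Rightarrow> nat \<Rightarrow> 'a \<Rightarrow> real" where "nrm S = snd S"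

definition lconv :: "'a::real_vector scale \<Rightarrow> nat \<Rightarrow> (nat \<Rightarrow> 'a) \<Rightarrow> 'a \<Rightarrow> bool" where
  "lconv S m X x \<longleftrightarrow> (\<forall>e>0. \<exists>N. \<forall>i\<ge>N. nrm S m (X i - x) < e)"

definition sc_banach :: "'a::banach scale \<Rightarrow> bool" where
  "sc_banach S \<longleftrightarrow>
     lev S 0 = UNIV \<and> (\<forall>x. nrm S 0 x = norm x) \<and>
     (\<forall>m. lev S (Suc m) \<subseteq> lev S m) \<and>
     (\<forall>m. subspace (lev S m)) \<and>
     (\<forall>m. \<forall>x\<in>lev S m. \<forall>y\<in>lev S m. \<forall>c.
          0 \<le> nrm S m x \<and> (nrm S m x = 0 \<longleftrightarrow> x = 0) \<and>
          nrm S m (c *\<^sub>R x) = \<bar>c\<bar> * nrm S m x \<and>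
          nrm S m (x + y) \<le> nrm S m x + nrm S m y) \<and>
     (\<forall>m X. (\<forall>i. X i \<in> lev S m) \<and>
            (\<forall>e>0. \<exists>N. \<forall>i\<ge>N. \<forall>j\<ge>N. nrm S m (X i - X j) < e)
            \<longrightarrow> (\<exists>x\<in>lev S m. lconv S m X x)) \<and>
     (\<forall>m (X::nat \<Rightarrow> 'a). (\<forall>i. X i \<in> lev S (Suc m)) \<and> (\<exists>B. \<forall>i. nrm S (Suc m) (X i) \<le> B)
            \<longrightarrow> (\<exists>r x. strict_mono r \<and> x \<in> lev S m \<and> lconv S m (X \<circ> r) x)) \<and>
     (\<forall>m. \<forall>x\<in>lev S m. \<forall>e>0. \<exists>y\<in>(\<Inter>k. lev S k). nrm S m (x - y) < e)"

definition const_scale :: "'a::real_normed_vector scale" where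
  "const_scale = (\<lambda>_. UNIV, \<lambda>_. norm)"

definition prod_scale :: "'a scale \<Rightarrow> 'b scale \<Rightarrow> ('a \<times> 'b) scale" where
  "prod_scale A B = (\<lambda>m. lev A m \<times> lev B m,
                     \<lambda>m p. sqrt ((nrm A m (fst p))\<^sup>2 + (nrm B m (snd p))\<^sup>2))"

definition shift_scale :: "'a scale \<Rightarrow> 'a scale" where
  "shift_scale S = (\<lambda>m. lev S (Suc m), \<lambda>m. nrm S (Suc m))"

text \<open>germ of neighbourhoods O(C,0): decreasing U_m, U_m relatively open neighbourhood of 0
  in C \<inter> E_m (topology of E_m)\<close>
definition germ_nbhd :: "'a::real_vector scale \<Rightarrow> 'a set \<Rightarrow> (nat \<Rightarrow> 'a set) \<Rightarrow> bool" where
  "germ_nbhd E C U \<longleftrightarrow>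
     (\<forall>m. U (Suc m) \<subseteq> U m) \<and>
     (\<forall>m. U m \<subseteq> C \<inter> lev E m \<and> 0 \<in> U m \<and>
          (\<forall>x\<in>U m. \<exists>d>0. \<forall>y\<in>C \<inter> lev E m. nrm E m (y - x) < d \<longrightarrow> y \<in> U m))"

definition sc0 :: "'a::real_vector scale \<Rightarrow> 'b::real_vector scale \<Rightarrow> (nat \<Rightarrow> 'a set)
                    \<Rightarrow> ('a \<Rightarrow> 'b) \<Rightarrow> bool" where
  "sc0 E F U g \<longleftrightarrow>
     (\<forall>m. g ` U m \<subseteq> lev F m \<and>
          (\<forall>x\<in>U m. \<forall>e>0. \<exists>d>0. \<forall>y\<in>U m. nrm E m (y - x) < d \<longrightarrow> nrm F m (g y - g x) < e))"

definition sc_deriv :: "'a::real_vector scale \<Rightarrow> 'b::real_vector scale \<Rightarrow> (nat \<Rightarrow> 'a set)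
                         \<Rightarrow> ('a \<Rightarrow> 'b) \<Rightarrow> 'a \<Rightarrow> ('a \<Rightarrow> 'b) \<Rightarrow> bool" where
  "sc_deriv E F U g x L \<longleftrightarrow>
     (\<forall>h\<in>lev E 0. L h \<in> lev F 0) \<and>
     (\<forall>h1\<in>lev E 0. \<forall>h2\<in>lev E 0. \<forall>c.
         L (h1 + h2) = L h1 + L h2 \<and> L (c *\<^sub>R h1) = c *\<^sub>R L h1) \<and>
     (\<exists>B. \<forall>h\<in>lev E 0. nrm F 0 (L h) \<le> B * nrm E 0 h) \<and>
     (\<forall>e>0. \<exists>d>0. \<forall>h. x + h \<in> U 1 \<and> nrm E 1 h < d \<longrightarrow>
                nrm F 0 (g (x + h) - g x - L h) \<le> e * nrm E 1 h)"

text \<open>T^j E is realised as tuples x :: nat \<Rightarrow> 'a with 2^j components; component i lies in the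
  shifted level E^(tsh j i).  T(X) = X^1 \<oplus> X puts X^1 in the first half.\<close>
fun tsh :: "nat \<Rightarrow> nat \<Rightarrow> nat" where
  "tsh 0 i = 0"
| "tsh (Suc j) i = (if i < 2 ^ j then Suc (tsh j i) else tsh j (i - 2 ^ j))"

definition tscale :: "'a::real_vector scale \<Rightarrow> nat \<Rightarrow> (nat \<Rightarrow> 'a) scale" where
  "tscale S j = (\<lambda>m. {x. (\<forall>i<2 ^ j. x i \<in> lev S (m + tsh j i)) \<and> (\<forall>i\<ge>2 ^ j. x i = 0)},
                 \<lambda>m x. \<Sum>i<2 ^ j. nrm S (m + tsh j i) (x i))"

definition tdom :: "'a::real_vector scale \<Rightarrow> (nat \<Rightarrow> 'a set) \<Rightarrow> nat \<Rightarrow> nat \<Rightarrow> (nat \<Rightarrow> 'a) set" where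
  "tdom E U j m = {x \<in> lev (tscale E j) m. x 0 \<in> U (m + j)}"

definition lowhalf :: "nat \<Rightarrow> (nat \<Rightarrow> 'a::zero) \<Rightarrow> nat \<Rightarrow> 'a" where
  "lowhalf j x = (\<lambda>i. if i < 2 ^ j then x i else 0)"
definition highhalf :: "nat \<Rightarrow> (nat \<Rightarrow> 'a::zero) \<Rightarrow> nat \<Rightarrow> 'a" where
  "highhalf j x = (\<lambda>i. if i < 2 ^ j then x (i + 2 ^ j) else 0)"

fun tmap :: "'a::real_vector scale \<Rightarrow> 'b::real_vector scale \<Rightarrow> (nat \<Rightarrow> 'a set) \<Rightarrow> ('a \<Rightarrow> 'b)
              \<Rightarrow> nat \<Rightarrow> (nat \<Rightarrow> 'a) \<Rightarrow> nat \<Rightarrow> 'b" where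
  "tmap E F U g 0 x = (\<lambda>i. if i = 0 then g (x 0) else 0)"
| "tmap E F U g (Suc j) x =
     (let lo = lowhalf j x; hi = highhalf j x;
          L = (SOME L. sc_deriv (tscale E j) (tscale F j) (tdom E U j) (tmap E F U g j) lo L)
      in (\<lambda>i. if i < 2 ^ j then tmap E F U g j lo i
               else if i < 2 ^ Suc j then L hi (i - 2 ^ j) else 0))"

text \<open>sc^k: T^j g is sc^0 for j \<le> k, and T^j g has an sc-derivative at every point of its
  level-1 domain for j < k (this unfolds the inductive definition "Tg is sc^(k-1)")\<close>
definition sck :: "'a::real_vector scale \<Rightarrow> 'b::real_vector scale \<Rightarrow> (nat \<Rightarrow> 'a set)
                    \<Rightarrow> ('a \<Rightarrow> 'b) \<Rightarrow> nat \<Rightarrow> bool" where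
  "sck E F U g k \<longleftrightarrow>
     (\<forall>j\<le>k. sc0 (tscale E j) (tscale F j) (tdom E U j) (tmap E F U g j) \<and>
             (j < k \<longrightarrow> (\<forall>x\<in>tdom E U j 1.
                 \<exists>L. sc_deriv (tscale E j) (tscale F j) (tdom E U j) (tmap E F U g j) x L)))"

definition sc_smooth :: "'a::real_vector scale \<Rightarrow> 'b::real_vector scale \<Rightarrow> (nat \<Rightarrow> 'a set)
                         \<Rightarrow> ('a \<Rightarrow> 'b) \<Rightarrow> bool" where
  "sc_smooth E F U g \<longleftrightarrow> (\<forall>k. sck E F U g k)"

definition sc_plus :: "'a::real_vector scale \<Rightarrow> 'b::real_vector scale \<Rightarrow> (nat \<Rightarrow> 'a set)
                       \<Rightarrow> ('a \<Rightarrow> 'b) \<Rightarrow> bool" where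
  "sc_plus E F U s \<longleftrightarrow>
     sc_smooth E F U s \<and> (\<forall>m. s ` U m \<subseteq> lev F (Suc m)) \<and> sc_smooth E (shift_scale F) U s"

definition sc_operator :: "'a::real_vector scale \<Rightarrow> 'b::real_vector scale \<Rightarrow> ('a \<Rightarrow> 'b) \<Rightarrow> bool" where
  "sc_operator E F T \<longleftrightarrow>
     (\<forall>h1\<in>lev E 0. \<forall>h2\<in>lev E 0. \<forall>c.
         T (h1 + h2) = T h1 + T h2 \<and> T (c *\<^sub>R h1) = c *\<^sub>R T h1) \<and>
     (\<forall>m. \<forall>x\<in>lev E m. T x \<in> lev F m) \<and>
     (\<forall>m. \<exists>B. \<forall>x\<in>lev E m. nrm F m (T x) \<le> B * nrm E m x)"

definition lclosed :: "'a::real_vector scale \<Rightarrow> nat \<Rightarrow> 'a set \<Rightarrow> bool" where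
  "lclosed E m A \<longleftrightarrow> (\<forall>X x. (\<forall>i. X i \<in> A) \<and> x \<in> lev E m \<and> lconv E m X x \<longrightarrow> x \<in> A)"

definition sc_splitting :: "'a::real_vector scale \<Rightarrow> 'a set \<Rightarrow> 'a set \<Rightarrow> bool" where
  "sc_splitting E A B \<longleftrightarrow>
     subspace A \<and> subspace B \<and> A \<subseteq> lev E 0 \<and> B \<subseteq> lev E 0 \<and> A \<inter> B = {0} \<and>
     (\<forall>m. \<forall>x\<in>lev E m. \<exists>a\<in>A \<inter> lev E m. \<exists>b\<in>B \<inter> lev E m. x = a + b) \<and>
     (\<forall>m. lclosed E m (A \<inter> lev E m) \<and> lclosed E m (B \<inter> lev E m)) \<and>
     (\<forall>m. \<exists>K. \<forall>a\<in>A \<inter> lev E m. \<forall>b\<in>B \<inter> lev E m.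
            nrm E m a \<le> K * nrm E m (a + b) \<and> nrm E m b \<le> K * nrm E m (a + b))"

definition sc_iso_on :: "'a::real_vector scale \<Rightarrow> 'b::real_vector scale \<Rightarrow> 'a set \<Rightarrow> 'b set
                         \<Rightarrow> ('a \<Rightarrow> 'b) \<Rightarrow> bool" where
  "sc_iso_on E F X Y T \<longleftrightarrow>
     (\<forall>m. bij_betw T (X \<inter> lev E m) (Y \<inter> lev F m)) \<and>
     (\<forall>m. \<exists>B. \<forall>x\<in>X \<inter> lev E m. nrm F m (T x) \<le> B * nrm E m x \<and> nrm E m x \<le> B * nrm F m (T x))"

definition findim :: "'a::real_vector set \<Rightarrow> bool" where
  "findim A \<longleftrightarrow> (\<exists>B. finite B \<and> span B = A)"

definition sc_fredholm_index :: "'a::real_vector scale \<Rightarrow> 'b::real_vector scale \<Rightarrow> ('a \<Rightarrow> 'b)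
                                 \<Rightarrow> int \<Rightarrow> bool" where
  "sc_fredholm_index E F T i \<longleftrightarrow>
     sc_operator E F T \<and>
     (\<exists>K X Y C. sc_splitting E K X \<and> sc_splitting F Y C \<and>
        K = {x\<in>lev E 0. T x = 0} \<and> findim K \<and> findim C \<and>
        Y = T ` X \<and> sc_iso_on E F X Y T \<and>
        i = int (dim K) - int (dim C))"

definition lin_fredholm_index :: "'a::real_vector scale \<Rightarrow> 'b::real_vector scale \<Rightarrow> (nat \<Rightarrow> 'a set)
                                  \<Rightarrow> ('a \<Rightarrow> 'b) \<Rightarrow> int \<Rightarrow> bool" where
  "lin_fredholm_index E F U g i \<longleftrightarrow>
     (\<exists>s L. sc_plus E F U s \<and> s 0 = g 0 \<and>
            sc_deriv E F U (\<lambda>x. g x - s x) 0 L \<and> sc_fredholm_index E F L i)"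

definition quadrant :: "'n::finite set \<Rightarrow> (real ^ 'n) set" where
  "quadrant J = {v. \<forall>i\<in>J. 0 \<le> v $ i}"

text \<open>f : O(V \<oplus> W, 0) \<rightarrow> (W, 0), f(v,w) = w - B(v,w), B a contraction in w on every level\<close>
definition sc0_contraction :: "'v::real_normed_vector set \<Rightarrow> 'w::real_vector scale
                               \<Rightarrow> (nat \<Rightarrow> ('v \<times> 'w) set) \<Rightarrow> ('v \<times> 'w \<Rightarrow> 'w) \<Rightarrow> bool" where
  "sc0_contraction V W U f \<longleftrightarrow>
     germ_nbhd (prod_scale const_scale W) (V \<times> UNIV) U \<and>
     sc0 (prod_scale const_scale W) W U f \<and> f (0, 0) = 0 \<and>
     (\<forall>m e. 0 < e \<and> e < 1 \<longrightarrow>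
        (\<exists>d>0. \<forall>v w w'. (v, w) \<in> U m \<and> (v, w') \<in> U m \<and>
            norm v < d \<and> nrm W m w < d \<and> nrm W m w' < d \<longrightarrow>
            nrm W m ((w - f (v, w)) - (w' - f (v, w'))) \<le> e * nrm W m (w - w')))"

end

theory Submission
  imports Defs
begin

definition normlike :: "'a::real_vector scale \<Rightarrow> bool" where
 "normlike S \<longleftrightarrow> (\<forall>m. subspace (lev S m)) \<and> (\<forall>m. lev S (Suc m) \<subseteq> lev S m) \<and>
   (\<forall>m. \<forall>x\<in>lev S m. 0 \<le> nrm S m x \<and> (nrm S m x = 0 \<longleftrightarrow> x = 0)) \<and>
   (\<forall>m. \<forall>x\<in>lev S m. \<forall>c. nrm S m (c *\<^sub>R x) = \<bar>c\<bar> * nrm S m x) \<and>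
   (\<forall>m. \<forall>x\<in>lev S m. \<forall>y\<in>lev S m. nrm S m (x+y) \<le> nrm S m x + nrm S m y)"

context fixes S :: "'a::real_vector scale" assumes NL: "normlike S"
begin
lemma nl_sub: "subspace (lev S m)" using NL by (auto simp: normlike_def)
lemma nl_add: "x \<in> lev S m \<Longrightarrow> y \<in> lev S m \<Longrightarrow> x + y \<in> lev S m"
  using nl_sub by (auto simp: subspace_def)
lemma nl_scale: "x \<in> lev S m \<Longrightarrow> c *\<^sub>R x \<in> lev S m"
  using nl_sub by (auto simp: subspace_def)
lemma nl_zero: "0 \<in> lev S m"
  using nl_sub by (auto simp: subspace_def)
lemma nl_uminus: "x \<in> lev S m \<Longrightarrow> - x \<in> lev S m"
  using nl_sub subspace_neg by blast
lemma nl_diff: "x \<in> lev S m \<Longrightarrow> y \<in> lev S m \<Longrightarrow> x - y \<in> lev S m"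
  using nl_sub subspace_diff by blast
lemma nl_nonneg: "x \<in> lev S m \<Longrightarrow> 0 \<le> nrm S m x"
  using NL by (auto simp: normlike_def)
lemma nl_eq0: "x \<in> lev S m \<Longrightarrow> nrm S m x = 0 \<longleftrightarrow> x = 0"
  using NL by (auto simp: normlike_def)
lemma nl_nrm0[simp]: "nrm S m 0 = 0"
  using nl_eq0 nl_zero by blast
lemma nl_hom: "x \<in> lev S m \<Longrightarrow> nrm S m (c *\<^sub>R x) = \<bar>c\<bar> * nrm S m x"
  using NL by (auto simp: normlike_def)
lemma nl_tri: "x \<in> lev S m \<Longrightarrow> y \<in> lev S m \<Longrightarrow> nrm S m (x+y) \<le> nrm S m x + nrm S m y"
  using NL by (auto simp: normlike_def)
lemma nl_minus: "x \<in> lev S m \<Longrightarrow> nrm S m (- x) = nrm S m x"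
  using nl_hom[of x m "-1"] by simp
lemma nl_commute: "x \<in> lev S m \<Longrightarrow> y \<in> lev S m \<Longrightarrow> nrm S m (x - y) = nrm S m (y - x)"
  using nl_minus[of "y - x" m] nl_diff by (metis minus_diff_eq)
lemma nl_tri_diff: "x \<in> lev S m \<Longrightarrow> y \<in> lev S m \<Longrightarrow> nrm S m (x-y) \<le> nrm S m x + nrm S m y"
  using nl_tri[of x m "-y"] nl_minus[of y m] nl_uminus by simp
lemma nl_mono: "m \<le> k \<Longrightarrow> lev S k \<subseteq> lev S m"
proof (induction k)
  case 0 then show ?case by simp
next
  case (Suc k)
  then show ?case using NL unfolding normlike_def by (metis le_Suc_eq order.trans order.refl)
qed
end

lemma normlike_shift: "normlike S \<Longrightarrow> normlike (shift_scale S)"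
  unfolding normlike_def shift_scale_def lev_def nrm_def by auto

lemma lev_const[simp]: "lev const_scale m = UNIV" by (simp add: lev_def const_scale_def)
lemma nrm_const[simp]: "nrm const_scale m = norm" by (simp add: nrm_def const_scale_def)
lemma lev_prod[simp]: "lev (prod_scale A B) m = lev A m \<times> lev B m" by (simp add: lev_def prod_scale_def)
lemma nrm_prod[simp]: "nrm (prod_scale A B) m p = sqrt ((nrm A m (fst p))\<^sup>2 + (nrm B m (snd p))\<^sup>2)"
  by (simp add: nrm_def prod_scale_def)
lemma lev_shift[simp]: "lev (shift_scale A) m = lev A (Suc m)" by (simp add: lev_def shift_scale_def)
lemma nrm_shift[simp]: "nrm (shift_scale A) m = nrm A (Suc m)" by (simp add: nrm_def shift_scale_def)

lemma sqrt_tri: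
  fixes a1 a2 b1 b2 :: real
  assumes "0 \<le> a1" "0 \<le> a2" "0 \<le> b1" "0 \<le> b2" "0 \<le> A" "0 \<le> B" "A \<le> a1 + a2" "B \<le> b1 + b2"
  shows "sqrt (A\<^sup>2 + B\<^sup>2) \<le> sqrt (a1\<^sup>2 + b1\<^sup>2) + sqrt (a2\<^sup>2 + b2\<^sup>2)"
proof -
  have "sqrt (A\<^sup>2 + B\<^sup>2) \<le> sqrt ((a1+a2)\<^sup>2 + (b1+b2)\<^sup>2)"
    using assms by (intro real_sqrt_le_mono add_mono power_mono) auto
  also have "\<dots> = cmod (Complex a1 b1 + Complex a2 b2)"
  proof -
    have "Complex a1 b1 + Complex a2 b2 = Complex (a1+a2) (b1+b2)" by (simp add: complex_eq_iff)
    then show ?thesis by (simp add: complex_norm)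
  qed
  also have "\<dots> \<le> cmod (Complex a1 b1) + cmod (Complex a2 b2)" by (rule norm_triangle_ineq)
  also have "\<dots> = sqrt (a1\<^sup>2 + b1\<^sup>2) + sqrt (a2\<^sup>2 + b2\<^sup>2)" by (simp add: complex_norm)
  finally show ?thesis .
qed

lemma normlike_prod:
  assumes "normlike (W::'w::real_vector scale)"
  shows "normlike (prod_scale (const_scale::'v::real_normed_vector scale) W)"
proof -
  note W = nl_sub[OF assms] nl_nonneg[OF assms] nl_eq0[OF assms] nl_hom[OF assms] nl_tri[OF assms]
  have sub: "subspace (lev (prod_scale (const_scale::'v scale) W) m)" for m
    using W(1)[of m] by (auto simp: subspace_def zero_prod_def)
  have mono: "lev (prod_scale (const_scale::'v scale) W) (Suc m) \<subseteq> lev (prod_scale const_scale W) m" for m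
    using assms by (auto simp: normlike_def)
  show ?thesis
    unfolding normlike_def
  proof (intro conjI allI ballI sub mono)
    fix m and x :: "'v \<times> 'w" assume x: "x \<in> lev (prod_scale const_scale W) m"
    show "0 \<le> nrm (prod_scale const_scale W) m x" by simp
    show "(nrm (prod_scale const_scale W) m x = 0) = (x = 0)"
      using x W(2,3)[of "snd x" m] by (cases x) (auto simp: zero_prod_def)
    fix c
    show "nrm (prod_scale const_scale W) m (c *\<^sub>R x) = \<bar>c\<bar> * nrm (prod_scale const_scale W) m x"
      using x W(4)[of "snd x" m c]
      by (cases x) (simp add: power_mult_distrib real_sqrt_mult distrib_left[symmetric])
  next
    fix m and x y :: "'v \<times> 'w" assume x: "x \<in> lev (prod_scale const_scale W) m"
      and y: "y \<in> lev (prod_scale const_scale W) m"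
    show "nrm (prod_scale const_scale W) m (x + y) \<le> nrm (prod_scale const_scale W) m x + nrm (prod_scale const_scale W) m y"
      using x y W(2)[of "snd x" m] W(2)[of "snd y" m] W(2)[of "snd x + snd y" m] W(5)[of "snd x" m "snd y"]
        W(1)[of m]
      by (cases x, cases y) (auto intro!: sqrt_tri norm_triangle_ineq simp: subspace_def)
  qed
qed


lemma tsh_0[simp]: "tsh j 0 = j" by (induction j) auto

lemma lev_tscale: "x \<in> lev (tscale S j) m \<longleftrightarrow> (\<forall>i<2^j. x i \<in> lev S (m + tsh j i)) \<and> (\<forall>i\<ge>2^j. x i = 0)"
  by (simp add: lev_def tscale_def)
lemma nrm_tscale: "nrm (tscale S j) m x = (\<Sum>i<2^j. nrm S (m + tsh j i) (x i))"
  by (simp add: nrm_def tscale_def)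

lemma fun_plus_app[simp]: "(f + g) i = f i + g i" by (simp add: plus_fun_def)
lemma fun_minus_app[simp]: "(f - g) i = f i - g i" by simp
lemma fun_uminus_app[simp]: "(- f) i = - f i" by simp
lemma fun_zero_app[simp]: "(0::'a \<Rightarrow> 'b::zero) i = 0" by (simp add: zero_fun_def)
lemma fun_scaleR_app[simp]: "(c *\<^sub>R f) i = c *\<^sub>R f i" by (simp add: scaleR_fun_def)

lemma normlike_tscale:
  assumes NL: "normlike S"
  shows "normlike (tscale S j)"
  unfolding normlike_def
proof (intro conjI allI ballI)
  fix m
  show "subspace (lev (tscale S j) m)"
    unfolding subspace_def
    by (auto simp: lev_tscale intro: nl_add[OF NL] nl_scale[OF NL] nl_zero[OF NL])
  show "lev (tscale S j) (Suc m) \<subseteq> lev (tscale S j) m"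
  proof
    fix x assume "x \<in> lev (tscale S j) (Suc m)"
    then show "x \<in> lev (tscale S j) m"
      unfolding lev_tscale using nl_mono[OF NL, of "m + tsh j i" "Suc m + tsh j i" for i] by fastforce
  qed
  fix x assume x: "x \<in> lev (tscale S j) m"
  show "0 \<le> nrm (tscale S j) m x" using x unfolding nrm_tscale lev_tscale
    by (auto intro!: sum_nonneg nl_nonneg[OF NL])
  show "nrm (tscale S j) m x = 0 \<longleftrightarrow> x = 0"
  proof
    assume "nrm (tscale S j) m x = 0"
    then have "\<forall>i\<in>{..<2^j}. nrm S (m + tsh j i) (x i) = 0"
      using x unfolding nrm_tscale lev_tscale
      by (subst sum_nonneg_eq_0_iff[symmetric]) (auto intro!: nl_nonneg[OF NL])
    then show "x = 0" using x unfolding lev_tscale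
      by (auto simp: fun_eq_iff nl_eq0[OF NL]) (metis lessThan_iff not_le)
  qed (simp add: nrm_tscale nl_nrm0[OF NL])
  fix c
  show "nrm (tscale S j) m (c *\<^sub>R x) = \<bar>c\<bar> * nrm (tscale S j) m x"
    using x unfolding nrm_tscale lev_tscale by (simp add: sum_distrib_left nl_hom[OF NL])
next
  fix m x y assume x: "x \<in> lev (tscale S j) m" and y: "y \<in> lev (tscale S j) m"
  show "nrm (tscale S j) m (x + y) \<le> nrm (tscale S j) m x + nrm (tscale S j) m y"
    using x y unfolding nrm_tscale lev_tscale
    by (simp add: sum.distrib[symmetric]) (intro sum_mono nl_tri[OF NL]; simp)
qed


definition dense_sc :: "'a::real_vector scale \<Rightarrow> bool" where
  "dense_sc S \<longleftrightarrow> (\<forall>k. \<forall>x\<in>lev S k. \<forall>e>0. \<exists>y\<in>lev S (Suc k). nrm S k (x - y) < e)"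

context fixes W :: "'w::banach scale" assumes SB: "sc_banach W"
begin
lemma scb1: "lev W 0 = UNIV" using SB unfolding sc_banach_def by (elim conjE) assumption
lemma scb2: "\<forall>x. nrm W 0 x = norm x" using SB unfolding sc_banach_def by (elim conjE) assumption
lemma scb3: "\<forall>m. lev W (Suc m) \<subseteq> lev W m" using SB unfolding sc_banach_def by (elim conjE) assumption
lemma scb4: "\<forall>m. subspace (lev W m)" using SB unfolding sc_banach_def by (elim conjE) assumption
lemma scb5: "\<forall>m. \<forall>x\<in>lev W m. \<forall>y\<in>lev W m. \<forall>c.
          0 \<le> nrm W m x \<and> (nrm W m x = 0 \<longleftrightarrow> x = 0) \<and>
          nrm W m (c *\<^sub>R x) = \<bar>c\<bar> * nrm W m x \<and>
          nrm W m (x + y) \<le> nrm W m x + nrm W m y" using SB unfolding sc_banach_def by (elim conjE) assumption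
lemma scb7: "\<forall>m (X::nat \<Rightarrow> 'w). (\<forall>i. X i \<in> lev W (Suc m)) \<and> (\<exists>B. \<forall>i. nrm W (Suc m) (X i) \<le> B)
            \<longrightarrow> (\<exists>r x. strict_mono r \<and> x \<in> lev W m \<and> lconv W m (X \<circ> r) x)"
  using SB unfolding sc_banach_def by (elim conjE) assumption
lemma scb8: "\<forall>m. \<forall>x\<in>lev W m. \<forall>e>0. \<exists>y\<in>(\<Inter>k. lev W k). nrm W m (x - y) < e"
  using SB unfolding sc_banach_def by (elim conjE) assumption

lemma scb_normlike: "normlike W"
proof -
  have a: "\<forall>m. \<forall>x\<in>lev W m. 0 \<le> nrm W m x \<and> (nrm W m x = 0 \<longleftrightarrow> x = 0)" using scb5 by blast
  have b: "\<forall>m. \<forall>x\<in>lev W m. \<forall>c. nrm W m (c *\<^sub>R x) = \<bar>c\<bar> * nrm W m x" using scb5 by blast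
  have c: "\<forall>m. \<forall>x\<in>lev W m. \<forall>y\<in>lev W m. nrm W m (x+y) \<le> nrm W m x + nrm W m y" using scb5 by blast
  show ?thesis unfolding normlike_def using scb3 scb4 a b c by blast
qed
lemma scb_lev0[simp]: "lev W 0 = UNIV" using scb1 .
lemma scb_nrm0[simp]: "nrm W 0 = norm" using scb2 by auto
lemma scb_dense: "dense_sc W"
  unfolding dense_sc_def
proof (intro allI ballI impI)
  fix k x and e :: real assume "x \<in> lev W k" "e > 0"
  then obtain y where "y \<in> (\<Inter>k. lev W k)" "nrm W k (x - y) < e" using scb8 by blast
  then show "\<exists>y\<in>lev W (Suc k). nrm W k (x - y) < e" by blast
qed

lemma scb_incl: "\<exists>C\<ge>0. \<forall>x\<in>lev W (Suc m). nrm W m x \<le> C * nrm W (Suc m) x"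
proof (rule ccontr)
  note NL = scb_normlike
  assume "\<not> ?thesis"
  then have "\<forall>C\<ge>0. \<exists>x\<in>lev W (Suc m). nrm W m x > C * nrm W (Suc m) x" by (meson not_le)
  then have "\<forall>i::nat. \<exists>x\<in>lev W (Suc m). nrm W m x > real i * nrm W (Suc m) x" by auto
  then obtain X where X: "\<And>i. X i \<in> lev W (Suc m)" "\<And>i. nrm W m (X i) > real i * nrm W (Suc m) (X i)"
    by metis
  have levm: "lev W (Suc m) \<subseteq> lev W m" using nl_mono[OF NL, of m "Suc m"] by simp
  have pos: "nrm W (Suc m) (X i) > 0" for i
  proof -
    have "X i \<noteq> 0" using X(2)[of i] by (auto simp: nl_nrm0[OF NL])
    then show ?thesis using X(1)[of i] nl_nonneg[OF NL] nl_eq0[OF NL] by (metis order.not_eq_order_implies_strict)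
  qed
  define Y where "Y i = (1 / nrm W (Suc m) (X i)) *\<^sub>R X i" for i
  have Y1: "Y i \<in> lev W (Suc m)" for i unfolding Y_def using X(1) nl_scale[OF NL] by blast
  have Yn: "nrm W (Suc m) (Y i) = 1" for i
    unfolding Y_def using pos[of i] nl_hom[OF NL, OF X(1)[of i]] by simp
  have Ym: "nrm W m (Y i) > real i" for i
  proof -
    have "nrm W m (Y i) = nrm W m (X i) / nrm W (Suc m) (X i)"
      unfolding Y_def using pos[of i] nl_hom[OF NL, of "X i" m] X(1)[of i] levm by auto
    then show ?thesis using X(2)[of i] pos[of i] by (simp add: pos_less_divide_eq)
  qed
  obtain r x where r: "strict_mono r" "x \<in> lev W m" "lconv W m (Y \<circ> r) x"
  proof -
    have "\<exists>B. \<forall>i. nrm W (Suc m) (Y i) \<le> B" using Yn by (intro exI[of _ 1]) simp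
    then show ?thesis using scb7 Y1 that by blast
  qed
  then obtain N where N: "\<And>i. i \<ge> N \<Longrightarrow> nrm W m (Y (r i) - x) < 1"
    unfolding lconv_def by force
  define i where "i = max N (nat (ceiling (1 + nrm W m x)))"
  have "nrm W m (Y (r i)) \<le> nrm W m (Y (r i) - x) + nrm W m x"
    using nl_tri[OF NL, of "Y (r i) - x" m x] Y1[of "r i"] levm r(2) nl_diff[OF NL, of "Y (r i)" m x] by auto
  also have "\<dots> < 1 + nrm W m x" using N[of i] unfolding i_def by auto
  also have "\<dots> \<le> real i" unfolding i_def by linarith
  also have "\<dots> \<le> real (r i)" using seq_suble[OF r(1)] by simp
  finally show False using Ym[of "r i"] by simp
qed

lemma scb_incl0: "\<exists>C\<ge>0. \<forall>x\<in>lev W m. norm x \<le> C * nrm W m x"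
proof (induction m)
  case 0 then show ?case by (intro exI[of _ 1]) auto
next
  case (Suc m)
  then obtain C where C: "C \<ge> 0" "\<forall>x\<in>lev W m. norm x \<le> C * nrm W m x" by blast
  obtain D where D: "D \<ge> 0" "\<forall>x\<in>lev W (Suc m). nrm W m x \<le> D * nrm W (Suc m) x"
    using scb_incl by blast
  have levm: "lev W (Suc m) \<subseteq> lev W m" using nl_mono[OF scb_normlike, of m "Suc m"] by simp
  show ?case
  proof (intro exI[of _ "C * D"] conjI ballI)
    show "0 \<le> C * D" using C D by simp
    fix x assume x: "x \<in> lev W (Suc m)"
    have "norm x \<le> C * nrm W m x" using C x levm by auto
    also have "\<dots> \<le> C * (D * nrm W (Suc m) x)" using D x C by (simp add: mult_left_mono)
    finally show "norm x \<le> C * D * nrm W (Suc m) x" by (simp add: mult.assoc)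
  qed
qed
end

lemma dense_prod:
  assumes "normlike (W::'w::real_vector scale)" "dense_sc W"
  shows "dense_sc (prod_scale (const_scale::'v::real_normed_vector scale) W)"
  unfolding dense_sc_def
proof (intro allI ballI impI)
  fix k and x :: "'v \<times> 'w" and e :: real
  assume x: "x \<in> lev (prod_scale const_scale W) k" and e: "e > 0"
  have sx: "snd x \<in> lev W k" using x by (cases x) auto
  then obtain y where y: "y \<in> lev W (Suc k)" "nrm W k (snd x - y) < e"
    using assms(2) e unfolding dense_sc_def by blast
  have yk: "y \<in> lev W k" using y nl_mono[OF assms(1), of k "Suc k"] by auto
  have "nrm W k (snd x - y) \<ge> 0" using nl_nonneg[OF assms(1)] nl_diff[OF assms(1)] x yk by (cases x) auto
  then show "\<exists>y\<in>lev (prod_scale const_scale W) (Suc k). nrm (prod_scale const_scale W) k (x - y) < e"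
    using y by (intro bexI[of _ "(fst x, y)"]) auto
qed

lemma dense_tscale:
  assumes NL: "normlike S" and D: "dense_sc S"
  shows "dense_sc (tscale S j)"
  unfolding dense_sc_def
proof (intro allI ballI impI)
  fix k x and e :: real assume x: "x \<in> lev (tscale S j) k" and e: "e > 0"
  have e': "e / 2^j > 0" using e by simp
  have "\<forall>i<2^j. \<exists>y\<in>lev S (Suc (k + tsh j i)). nrm S (k + tsh j i) (x i - y) < e / 2^j"
    using x D e' unfolding lev_tscale dense_sc_def by blast
  then obtain f where f: "\<And>i. i < 2^j \<Longrightarrow> f i \<in> lev S (Suc (k + tsh j i)) \<and> nrm S (k + tsh j i) (x i - f i) < e / 2^j"
    by metis
  define y where "y i = (if i < 2^j then f i else 0)" for i
  have "y \<in> lev (tscale S j) (Suc k)" unfolding lev_tscale y_def using f by auto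
  moreover have "nrm (tscale S j) k (x - y) < e"
  proof -
    have "nrm (tscale S j) k (x - y) = (\<Sum>i<2^j. nrm S (k + tsh j i) (x i - f i))"
      unfolding nrm_tscale y_def by simp
    also have "\<dots> < (\<Sum>i<(2::nat)^j. e / 2^j)"
      by (rule sum_strict_mono) (use f in \<open>auto simp: lessThan_empty_iff\<close>)
    also have "\<dots> = e" by simp
    finally show ?thesis .
  qed
  ultimately show "\<exists>y\<in>lev (tscale S j) (Suc k). nrm (tscale S j) k (x - y) < e" by blast
qed


lemma le0_by_eps:
  fixes a K :: real
  assumes "\<And>e. e > 0 \<Longrightarrow> a \<le> e * K"
  shows "a \<le> 0"
proof (rule ccontr)
  assume "\<not> a \<le> 0"
  then have a: "a > 0" by simp
  define e where "e = a / (2 * (\<bar>K\<bar> + 1))"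
  have e: "e > 0" unfolding e_def using a by simp
  have "e * K \<le> e * \<bar>K\<bar>" using e by (simp add: mult_left_mono)
  also have "\<dots> < e * (\<bar>K\<bar> + 1)" using e by simp
  also have "\<dots> = a / 2" unfolding e_def by (simp add: field_simps)
  finally show False using assms[OF e] a by simp
qed

lemma germ_U_mono:
  assumes "germ_nbhd E C U" "m \<le> k" shows "U k \<subseteq> U m"
  using assms(2)
proof (induction k)
  case 0 then show ?case by simp
next
  case (Suc k) then show ?case using assms(1) unfolding germ_nbhd_def by (metis le_Suc_eq order.trans order.refl)
qed

lemma germ_U_lev: "germ_nbhd E C U \<Longrightarrow> x \<in> U m \<Longrightarrow> x \<in> lev E m \<and> x \<in> C"
  unfolding germ_nbhd_def by blast

lemma germ_U_0: "germ_nbhd E C U \<Longrightarrow> 0 \<in> U m"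
  unfolding germ_nbhd_def by blast

lemma tdom_mono:
  assumes NE: "normlike E" and GN: "germ_nbhd E C U" and "m \<le> k"
  shows "tdom E U j k \<subseteq> tdom E U j m"
proof
  fix x assume x: "x \<in> tdom E U j k"
  have "x \<in> lev (tscale E j) m" using x nl_mono[OF normlike_tscale[OF NE] assms(3)] unfolding tdom_def by blast
  moreover have "x 0 \<in> U (m + j)" using x germ_U_mono[OF GN, of "m + j" "k + j"] assms(3) unfolding tdom_def by auto
  ultimately show "x \<in> tdom E U j m" unfolding tdom_def by blast
qed

lemma sc_derivD:
  assumes "sc_deriv E F U g x L"
  shows "\<And>h. h \<in> lev E 0 \<Longrightarrow> L h \<in> lev F 0"
    "\<And>h1 h2. h1 \<in> lev E 0 \<Longrightarrow> h2 \<in> lev E 0 \<Longrightarrow> L (h1 + h2) = L h1 + L h2"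
    "\<And>h c. h \<in> lev E 0 \<Longrightarrow> L (c *\<^sub>R h) = c *\<^sub>R L h"
    "\<exists>B. \<forall>h\<in>lev E 0. nrm F 0 (L h) \<le> B * nrm E 0 h"
    "\<And>e. e > 0 \<Longrightarrow> \<exists>d>0. \<forall>h. x + h \<in> U 1 \<and> nrm E 1 h < d \<longrightarrow> nrm F 0 (g (x + h) - g x - L h) \<le> e * nrm E 1 h"
  using assms unfolding sc_deriv_def by blast+

lemma sc_deriv_diff:
  assumes "sc_deriv E F U g x L" "normlike E" "h1 \<in> lev E 0" "h2 \<in> lev E 0"
  shows "L (h1 - h2) = L h1 - L h2"
proof -
  have "L h1 = L ((h1 - h2) + h2)" by simp
  also have "\<dots> = L (h1 - h2) + L h2" using sc_derivD(2)[OF assms(1)] nl_diff[OF assms(2)] assms(3,4) by blast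
  finally show ?thesis by simp
qed

context
  fixes W :: "'w::banach scale" and J :: "'n::finite set" and U :: "nat \<Rightarrow> ((real ^ 'n) \<times> 'w) set"
  assumes SB: "sc_banach W"
    and GN: "germ_nbhd (prod_scale const_scale W) (quadrant J \<times> UNIV) U"
begin

abbreviation "EE \<equiv> prod_scale (const_scale :: (real ^ 'n) scale) W"

lemma NE: "normlike EE" by (rule normlike_prod[OF scb_normlike[OF SB]])
lemma NTE: "normlike (tscale EE j)" by (rule normlike_tscale[OF NE])
lemma DTE: "dense_sc (tscale EE j)"
  by (rule dense_tscale[OF NE dense_prod[OF scb_normlike[OF SB] scb_dense[OF SB]]])

lemma deriv_unique:
  fixes F :: "'b::real_vector scale" and f
  assumes NF: "normlike F"
    and D1: "sc_deriv (tscale EE j) (tscale F j) (tdom EE U j) f x L1"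
    and D2: "sc_deriv (tscale EE j) (tscale F j) (tdom EE U j) f x L2"
    and fl: "\<And>y. y \<in> tdom EE U j 1 \<Longrightarrow> f y \<in> lev (tscale F j) 0"
    and x: "x \<in> tdom EE U j 1"
    and h: "h \<in> lev (tscale EE j) 0"
  shows "L1 h = L2 h"
proof -
  note NTF = normlike_tscale[OF NF, of j]
  note NTE = NTE[of j]
  have l10: "lev (tscale EE j) 1 \<subseteq> lev (tscale EE j) 0" using nl_mono[OF NTE, of 0 1] by simp
  have x1: "x \<in> lev (tscale EE j) 1" and x0U: "x 0 \<in> U (Suc j)" using x unfolding tdom_def by auto
  have x0C: "x 0 \<in> quadrant J \<times> UNIV" using germ_U_lev[OF GN x0U] by blast
  have x0lev: "x 0 \<in> lev EE (Suc j)" using germ_U_lev[OF GN x0U] by blast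
  define Dl where "Dl h = L1 h - L2 h" for h
  have Dl_lev: "Dl h \<in> lev (tscale F j) 0" if "h \<in> lev (tscale EE j) 0" for h
    unfolding Dl_def using sc_derivD(1)[OF D1 that] sc_derivD(1)[OF D2 that] nl_diff[OF NTF] by blast
  have Dl_add: "Dl (h1 + h2) = Dl h1 + Dl h2" if "h1 \<in> lev (tscale EE j) 0" "h2 \<in> lev (tscale EE j) 0" for h1 h2
    unfolding Dl_def using sc_derivD(2)[OF D1 that] sc_derivD(2)[OF D2 that] by simp
  have Dl_scale: "Dl (c *\<^sub>R h) = c *\<^sub>R Dl h" if "h \<in> lev (tscale EE j) 0" for h c
    unfolding Dl_def using sc_derivD(3)[OF D1 that] sc_derivD(3)[OF D2 that] by (simp add: scaleR_diff_right)
  have stepa: "Dl h = 0" if h1: "h \<in> lev (tscale EE j) 1" and hC: "x 0 + h 0 \<in> quadrant J \<times> UNIV" for h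
  proof -
    have h0: "h \<in> lev (tscale EE j) 0" using h1 l10 by blast
    have "nrm (tscale F j) 0 (Dl h) \<le> 0"
    proof (rule le0_by_eps)
      fix e :: real assume e: "e > 0"
      obtain d1 where d1: "d1 > 0" "\<forall>h. x + h \<in> tdom EE U j 1 \<and> nrm (tscale EE j) 1 h < d1 \<longrightarrow>
          nrm (tscale F j) 0 (f (x + h) - f x - L1 h) \<le> e * nrm (tscale EE j) 1 h"
        using sc_derivD(5)[OF D1 e] by blast
      obtain d2 where d2: "d2 > 0" "\<forall>h. x + h \<in> tdom EE U j 1 \<and> nrm (tscale EE j) 1 h < d2 \<longrightarrow>
          nrm (tscale F j) 0 (f (x + h) - f x - L2 h) \<le> e * nrm (tscale EE j) 1 h"
        using sc_derivD(5)[OF D2 e] by blast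
      obtain dl where dl: "dl > 0" "\<forall>y\<in>(quadrant J \<times> UNIV) \<inter> lev EE (Suc j). nrm EE (Suc j) (y - x 0) < dl \<longrightarrow> y \<in> U (Suc j)"
        using GN x0U unfolding germ_nbhd_def by blast
      have ev: "\<forall>\<^sub>F t in at_right (0::real). t > 0 \<and> t \<le> 1 \<and> t * nrm (tscale EE j) 1 h < d1 \<and>
                  t * nrm (tscale EE j) 1 h < d2 \<and> t * nrm EE (Suc j) (h 0) < dl"
      proof -
        have lim: "((\<lambda>t. t * a) \<longlongrightarrow> 0) (at_right (0::real))" for a :: real
          by (rule tendsto_eq_intros | simp)+
        have e1: "\<forall>\<^sub>F t in at_right (0::real). t \<in> {0<..<1}" by (rule eventually_at_right_real) simp
        have e2: "\<forall>\<^sub>F t in at_right (0::real). t * nrm (tscale EE j) 1 h < d1"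
          using order_tendstoD(2)[OF lim d1(1)] .
        have e3: "\<forall>\<^sub>F t in at_right (0::real). t * nrm (tscale EE j) 1 h < d2"
          using order_tendstoD(2)[OF lim d2(1)] .
        have e4: "\<forall>\<^sub>F t in at_right (0::real). t * nrm EE (Suc j) (h 0) < dl"
          using order_tendstoD(2)[OF lim dl(1)] .
        show ?thesis using e1 e2 e3 e4 by eventually_elim auto
      qed
      obtain t where t: "t > 0" "t \<le> 1" "t * nrm (tscale EE j) 1 h < d1"
        "t * nrm (tscale EE j) 1 h < d2" "t * nrm EE (Suc j) (h 0) < dl"
        using eventually_happens[OF ev] by auto
      have th1: "t *\<^sub>R h \<in> lev (tscale EE j) 1" using nl_scale[OF NTE h1] .
      have th0: "t *\<^sub>R h \<in> lev (tscale EE j) 0" using th1 l10 by blast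
      have hlev: "h 0 \<in> lev EE (Suc j)" using h1 unfolding lev_tscale by (metis tsh_0 plus_1_eq_Suc zero_less_numeral zero_less_power)
      have xth: "x + t *\<^sub>R h \<in> tdom EE U j 1"
      proof -
        have "x + t *\<^sub>R h \<in> lev (tscale EE j) 1" using nl_add[OF NTE x1 th1] .
        moreover have "x 0 + t *\<^sub>R h 0 \<in> U (Suc j)"
        proof -
          have y1: "x 0 + t *\<^sub>R h 0 \<in> quadrant J \<times> UNIV"
          proof -
            have "0 \<le> (fst (x 0) + t *\<^sub>R fst (h 0)) $ i" if "i \<in> J" for i
            proof -
              have a: "0 \<le> fst (x 0) $ i" using x0C that by (auto simp: quadrant_def mem_Times_iff)
              have b: "0 \<le> fst (x 0) $ i + fst (h 0) $ i" using hC that by (auto simp: quadrant_def mem_Times_iff)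
              have "(fst (x 0) + t *\<^sub>R fst (h 0)) $ i = (1 - t) * fst (x 0) $ i + t * (fst (x 0) $ i + fst (h 0) $ i)"
                by (simp add: algebra_simps)
              also have "\<dots> \<ge> 0"
              proof -
                have "0 \<le> (1 - t) * fst (x 0) $ i" using a t by simp
                moreover have "0 \<le> t * (fst (x 0) $ i + fst (h 0) $ i)" using b t by simp
                ultimately show ?thesis by linarith
              qed
              finally show ?thesis .
            qed
            then show ?thesis by (auto simp: quadrant_def mem_Times_iff)
          qed
          have y2: "x 0 + t *\<^sub>R h 0 \<in> lev EE (Suc j)"
            using nl_add[OF NE x0lev nl_scale[OF NE hlev]] .
          have y3: "nrm EE (Suc j) ((x 0 + t *\<^sub>R h 0) - x 0) < dl"
            using t(5) nl_hom[OF NE hlev, of t] t(1) by simp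
          show ?thesis using dl(2)[rule_format, OF IntI[OF y1 y2] y3] .
        qed
        ultimately show ?thesis unfolding tdom_def by simp
      qed
      have nth: "nrm (tscale EE j) 1 (t *\<^sub>R h) = t * nrm (tscale EE j) 1 h"
        using nl_hom[OF NTE h1, of t] t by simp
      have E1: "nrm (tscale F j) 0 (f (x + t *\<^sub>R h) - f x - L1 (t *\<^sub>R h)) \<le> e * (t * nrm (tscale EE j) 1 h)"
        using d1(2) xth t(3) nth by metis
      have E2: "nrm (tscale F j) 0 (f (x + t *\<^sub>R h) - f x - L2 (t *\<^sub>R h)) \<le> e * (t * nrm (tscale EE j) 1 h)"
        using d2(2) xth t(4) nth by metis
      have fx: "f x \<in> lev (tscale F j) 0" "f (x + t *\<^sub>R h) \<in> lev (tscale F j) 0" using fl x xth by auto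
      have A1: "f (x + t *\<^sub>R h) - f x - L1 (t *\<^sub>R h) \<in> lev (tscale F j) 0"
        using nl_diff[OF NTF nl_diff[OF NTF fx(2) fx(1)] sc_derivD(1)[OF D1 th0]] .
      have A2: "f (x + t *\<^sub>R h) - f x - L2 (t *\<^sub>R h) \<in> lev (tscale F j) 0"
        using nl_diff[OF NTF nl_diff[OF NTF fx(2) fx(1)] sc_derivD(1)[OF D2 th0]] .
      have "Dl (t *\<^sub>R h) = (f (x + t *\<^sub>R h) - f x - L2 (t *\<^sub>R h)) - (f (x + t *\<^sub>R h) - f x - L1 (t *\<^sub>R h))"
        unfolding Dl_def by simp
      then have "nrm (tscale F j) 0 (Dl (t *\<^sub>R h)) \<le> e * (t * nrm (tscale EE j) 1 h) + e * (t * nrm (tscale EE j) 1 h)"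
        using nl_tri_diff[OF NTF A2 A1] E1 E2 by simp
      moreover have "nrm (tscale F j) 0 (Dl (t *\<^sub>R h)) = t * nrm (tscale F j) 0 (Dl h)"
        using Dl_scale[OF h0, of t] nl_hom[OF NTF Dl_lev[OF h0], of t] t by simp
      ultimately have "t * nrm (tscale F j) 0 (Dl h) \<le> t * (e * (2 * nrm (tscale EE j) 1 h))"
        by (simp add: algebra_simps)
      then show "nrm (tscale F j) 0 (Dl h) \<le> e * (2 * nrm (tscale EE j) 1 h)"
        using t(1) by simp
    qed
    then show ?thesis using nl_nonneg[OF NTF Dl_lev[OF h0]] nl_eq0[OF NTF Dl_lev[OF h0]] by simp
  qed
  have stepb: "Dl h = 0" if h1: "h \<in> lev (tscale EE j) 1" for h
  proof -
    define q :: "real ^ 'n" where "q = (\<chi> i. norm (fst (h 0)))"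
    define Q :: "nat \<Rightarrow> (real ^ 'n) \<times> 'w" where "Q = (\<lambda>i. if i = 0 then (q, 0) else 0)"
    have Q1: "Q \<in> lev (tscale EE j) 1" unfolding Q_def lev_tscale
      using nl_zero[OF NE] nl_zero[OF scb_normlike[OF SB]] by auto
    have QC: "x 0 + Q 0 \<in> quadrant J \<times> UNIV"
      using x0C unfolding Q_def q_def quadrant_def by (cases "x 0") auto
    have hQC: "x 0 + (h + Q) 0 \<in> quadrant J \<times> UNIV"
    proof -
      have "0 \<le> fst (x 0) $ i + fst (h 0) $ i + norm (fst (h 0))" if "i \<in> J" for i
      proof -
        have "0 \<le> fst (x 0) $ i" using x0C that by (auto simp: quadrant_def mem_Times_iff)
        moreover have "\<bar>fst (h 0) $ i\<bar> \<le> norm (fst (h 0))" by (rule component_le_norm_cart)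
        ultimately show ?thesis by linarith
      qed
      then show ?thesis unfolding Q_def q_def quadrant_def by (auto simp: add.assoc mem_Times_iff)
    qed
    have "Dl (h + Q) = 0" using stepa[OF nl_add[OF NTE h1 Q1] hQC] .
    moreover have "Dl Q = 0" using stepa[OF Q1 QC] .
    moreover have "Dl (h + Q) = Dl h + Dl Q" using Dl_add h1 Q1 l10 by blast
    ultimately show ?thesis by simp
  qed
  obtain B1 where B1: "\<forall>h\<in>lev (tscale EE j) 0. nrm (tscale F j) 0 (L1 h) \<le> B1 * nrm (tscale EE j) 0 h"
    using sc_derivD(4)[OF D1] by blast
  obtain B2 where B2: "\<forall>h\<in>lev (tscale EE j) 0. nrm (tscale F j) 0 (L2 h) \<le> B2 * nrm (tscale EE j) 0 h"
    using sc_derivD(4)[OF D2] by blast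
  have "nrm (tscale F j) 0 (Dl h) \<le> 0"
  proof (rule le0_by_eps)
    fix e :: real assume e: "e > 0"
    obtain h' where h': "h' \<in> lev (tscale EE j) 1" "nrm (tscale EE j) 0 (h - h') < e"
      using DTE[of j] h e unfolding dense_sc_def by force
    have h'0: "h' \<in> lev (tscale EE j) 0" using h' l10 by blast
    have hd: "h - h' \<in> lev (tscale EE j) 0" using nl_diff[OF NTE h h'0] .
    have "Dl h = Dl (h - h') + Dl h'" using Dl_add[OF hd h'0] by simp
    also have "\<dots> = Dl (h - h')" using stepb[OF h'(1)] by simp
    finally have eq: "Dl h = L1 (h - h') - L2 (h - h')" unfolding Dl_def .
    have nn: "0 \<le> nrm (tscale EE j) 0 (h - h')" using nl_nonneg[OF NTE hd] .
    have "nrm (tscale F j) 0 (Dl h) \<le> nrm (tscale F j) 0 (L1 (h - h')) + nrm (tscale F j) 0 (L2 (h - h'))"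
      unfolding eq by (rule nl_tri_diff[OF NTF sc_derivD(1)[OF D1 hd] sc_derivD(1)[OF D2 hd]])
    also have "\<dots> \<le> B1 * nrm (tscale EE j) 0 (h - h') + B2 * nrm (tscale EE j) 0 (h - h')"
      using B1 B2 hd by (intro add_mono) auto
    also have "\<dots> \<le> \<bar>B1\<bar> * nrm (tscale EE j) 0 (h - h') + \<bar>B2\<bar> * nrm (tscale EE j) 0 (h - h')"
      using nn by (intro add_mono mult_right_mono) auto
    also have "\<dots> \<le> \<bar>B1\<bar> * e + \<bar>B2\<bar> * e"
      using h'(2) by (intro add_mono mult_left_mono) auto
    finally show "nrm (tscale F j) 0 (Dl h) \<le> e * (\<bar>B1\<bar> + \<bar>B2\<bar>)" by (simp add: algebra_simps)
  qed
  then have "Dl h = 0" using nl_nonneg[OF NTF Dl_lev[OF h]] nl_eq0[OF NTF Dl_lev[OF h]] by simp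
  then show ?thesis unfolding Dl_def by simp
qed


lemma affine_smooth:
  fixes F :: "'b::real_vector scale" and c :: 'b and l :: "(real ^ 'n) \<times> 'w \<Rightarrow> 'b"
  assumes NF: "normlike F" and cl: "\<And>m. c \<in> lev F m" and lin: "linear l"
    and lv: "\<And>m x. l x \<in> lev F m"
    and bd: "\<And>m. \<exists>B\<ge>0. \<forall>x\<in>lev EE m. nrm F m (l x) \<le> B * nrm EE m x"
  shows "sc_smooth EE F U (\<lambda>x. c + l x)"
proof -
  define s where "s = (\<lambda>x. c + l x)"
  obtain Bf where Bf: "\<And>m. Bf m \<ge> 0" "\<And>m x. x \<in> lev EE m \<Longrightarrow> nrm F m (l x) \<le> Bf m * nrm EE m x"
    using bd by metis
  define tm :: "nat \<Rightarrow> (nat \<Rightarrow> (real ^ 'n) \<times> 'w) \<Rightarrow> nat \<Rightarrow> 'b" where "tm j x = (\<lambda>i. if i < 2^j then (if i = 0 then c else 0) + l (x i) else 0)" for j x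
  define Lam :: "nat \<Rightarrow> (nat \<Rightarrow> (real ^ 'n) \<times> 'w) \<Rightarrow> nat \<Rightarrow> 'b" where "Lam j h = (\<lambda>i. if i < 2^j then l (h i) else 0)" for j h
  define BS where "BS j m = (\<Sum>i<(2::nat)^j. Bf (m + tsh j i))" for j m
  note NTF = normlike_tscale[OF NF]
  have BS0: "BS j m \<ge> 0" for j m unfolding BS_def using Bf(1) by (simp add: sum_nonneg)
  have tm_lev: "tm j x \<in> lev (tscale F j) m" for j x m
    unfolding tm_def lev_tscale using cl lv nl_add[OF NF] nl_zero[OF NF] by auto
  have Lam_lev: "Lam j h \<in> lev (tscale F j) m" for j h m
    unfolding Lam_def lev_tscale using lv by auto
  have Lam_bound: "nrm (tscale F j) m (Lam j h) \<le> BS j m * nrm (tscale EE j) m h"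
    if h: "h \<in> lev (tscale EE j) m" for j m h
  proof -
    have hi: "h i \<in> lev EE (m + tsh j i)" if "i < 2^j" for i using h that unfolding lev_tscale by blast
    have "nrm (tscale F j) m (Lam j h) = (\<Sum>i<2^j. nrm F (m + tsh j i) (l (h i)))"
      unfolding nrm_tscale Lam_def by simp
    also have "\<dots> \<le> (\<Sum>i<2^j. Bf (m + tsh j i) * nrm EE (m + tsh j i) (h i))"
      using Bf(2) hi by (intro sum_mono) auto
    also have "\<dots> \<le> (\<Sum>i<2^j. BS j m * nrm EE (m + tsh j i) (h i))"
    proof (intro sum_mono mult_right_mono)
      fix i assume i: "i \<in> {..<(2::nat)^j}"
      show "Bf (m + tsh j i) \<le> BS j m" unfolding BS_def
        using member_le_sum[of i "{..<(2::nat)^j}" "\<lambda>i. Bf (m + tsh j i)"] i Bf(1) by auto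
      show "0 \<le> nrm EE (m + tsh j i) (h i)" using nl_nonneg[OF NE hi] i by auto
    qed
    also have "\<dots> = BS j m * nrm (tscale EE j) m h" unfolding nrm_tscale by (simp add: sum_distrib_left)
    finally show ?thesis .
  qed
  have tm_diff: "tm j y - tm j x = Lam j (y - x)" for j x y
    unfolding tm_def Lam_def fun_eq_iff by (simp add: linear_diff[OF lin])
  have tm_add: "tm j (x + h) - tm j x - Lam j h = 0" for j x h
    unfolding tm_def Lam_def fun_eq_iff by (simp add: linear_add[OF lin])
  have Lam_add: "Lam j (h1 + h2) = Lam j h1 + Lam j h2" for j h1 h2
    unfolding Lam_def fun_eq_iff by (simp add: linear_add[OF lin])
  have Lam_scale: "Lam j (a *\<^sub>R h) = a *\<^sub>R Lam j h" for j h a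
    unfolding Lam_def fun_eq_iff by (simp add: linear_scale[OF lin])
  have deriv: "sc_deriv (tscale EE j) (tscale F j) (tdom EE U j) (tmap EE F U s j) x (Lam j)"
    if form: "\<forall>y\<in>tdom EE U j 0. tmap EE F U s j y = tm j y" and x: "x \<in> tdom EE U j 1" for j x
    unfolding sc_deriv_def
  proof (intro conjI ballI allI impI)
    fix h show "Lam j h \<in> lev (tscale F j) 0" by (rule Lam_lev)
  next
    fix h1 h2 :: "nat \<Rightarrow> (real ^ 'n) \<times> 'w" and a :: real
    show "Lam j (h1 + h2) = Lam j h1 + Lam j h2" by (rule Lam_add)
    show "Lam j (a *\<^sub>R h1) = a *\<^sub>R Lam j h1" by (rule Lam_scale)
  next
    show "\<exists>B. \<forall>h\<in>lev (tscale EE j) 0. nrm (tscale F j) 0 (Lam j h) \<le> B * nrm (tscale EE j) 0 h"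
      using Lam_bound by blast
  next
    fix e :: real assume e: "e > 0"
    show "\<exists>d>0. \<forall>h. x + h \<in> tdom EE U j 1 \<and> nrm (tscale EE j) 1 h < d \<longrightarrow>
        nrm (tscale F j) 0 (tmap EE F U s j (x + h) - tmap EE F U s j x - Lam j h) \<le> e * nrm (tscale EE j) 1 h"
    proof (intro exI[of _ 1] conjI allI impI)
      fix h assume h: "x + h \<in> tdom EE U j 1 \<and> nrm (tscale EE j) 1 h < 1"
      have sub: "tdom EE U j 1 \<subseteq> tdom EE U j 0" by (rule tdom_mono[OF NE GN]) simp
      have "tmap EE F U s j (x + h) - tmap EE F U s j x - Lam j h = 0"
      proof -
        have "x + h \<in> tdom EE U j 0" "x \<in> tdom EE U j 0" using h x sub by auto
        then show ?thesis using form tm_add[of j x h] by simp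
      qed
      moreover have "h \<in> lev (tscale EE j) 1"
      proof -
        have "(x + h) - x \<in> lev (tscale EE j) 1" using h x unfolding tdom_def by (intro nl_diff[OF NTE]) auto
        then show ?thesis by simp
      qed
      ultimately show "nrm (tscale F j) 0 (tmap EE F U s j (x + h) - tmap EE F U s j x - Lam j h) \<le> e * nrm (tscale EE j) 1 h"
        using nl_nonneg[OF NTE] e by (simp add: nl_nrm0[OF NTF])
    qed simp
  qed
  have form: "\<forall>x\<in>tdom EE U j 0. tmap EE F U s j x = tm j x" for j
  proof (induction j)
    case 0
    show ?case unfolding tm_def s_def by (auto simp: fun_eq_iff)
  next
    case (Suc j)
    show ?case
    proof
      fix x assume x: "x \<in> tdom EE U (Suc j) 0"
      define lo where "lo = lowhalf j x"
      define hi where "hi = highhalf j x"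
      define Ls where "Ls = (SOME L. sc_deriv (tscale EE j) (tscale F j) (tdom EE U j) (tmap EE F U s j) lo L)"
      have xl: "\<And>i. i < 2^Suc j \<Longrightarrow> x i \<in> lev EE (tsh (Suc j) i)" "\<And>i. i \<ge> 2^Suc j \<Longrightarrow> x i = 0"
        "x 0 \<in> U (Suc j)"
        using x unfolding tdom_def lev_tscale by auto
      have xlo: "x i \<in> lev EE (Suc (tsh j i))" if "i < 2^j" for i
      proof -
        have "i < 2^Suc j" using that by simp
        then show ?thesis using xl(1)[of i] that by simp
      qed
      have xhi: "x (i + 2^j) \<in> lev EE (tsh j i)" if "i < 2^j" for i
      proof -
        have "i + 2^j < 2^Suc j" using that by simp
        then show ?thesis using xl(1)[of "i + 2^j"] that by simp
      qed
      have lo1: "lo \<in> tdom EE U j 1"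
        unfolding tdom_def lev_tscale lo_def lowhalf_def using xl(3) xlo by auto
      have hi0: "hi \<in> lev (tscale EE j) 0"
        unfolding lev_tscale hi_def highhalf_def using xhi by auto
      have sub: "tdom EE U j 1 \<subseteq> tdom EE U j 0" by (rule tdom_mono[OF NE GN]) simp
      have D1: "sc_deriv (tscale EE j) (tscale F j) (tdom EE U j) (tmap EE F U s j) lo (Lam j)"
        using deriv[OF Suc.IH lo1] .
      then have D2: "sc_deriv (tscale EE j) (tscale F j) (tdom EE U j) (tmap EE F U s j) lo Ls"
        unfolding Ls_def by (rule someI[of "sc_deriv (tscale EE j) (tscale F j) (tdom EE U j) (tmap EE F U s j) lo"])
      have fl: "tmap EE F U s j y \<in> lev (tscale F j) 0" if "y \<in> tdom EE U j 1" for y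
        using Suc.IH that sub tm_lev by auto
      have LsL: "Ls hi = Lam j hi"
        using deriv_unique[OF NF D2 D1 fl lo1 hi0] by blast
      have "tmap EE F U s (Suc j) x = (\<lambda>i. if i < 2^j then tmap EE F U s j lo i
               else if i < 2^Suc j then Ls hi (i - 2^j) else 0)"
        unfolding lo_def hi_def Ls_def by (simp add: Let_def)
      also have "\<dots> = tm (Suc j) x"
      proof
        fix i
        show "(if i < 2^j then tmap EE F U s j lo i else if i < 2^Suc j then Ls hi (i - 2^j) else 0) = tm (Suc j) x i"
        proof (cases "i < 2^j")
          case True
          have "tmap EE F U s j lo = tm j lo" using Suc.IH lo1 sub by blast
          then show ?thesis using True by (simp add: tm_def lo_def lowhalf_def)
        next
          case F1: False
          show ?thesis
          proof (cases "i < 2^Suc j")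
            case True
            have "i - 2^j < 2^j" using True F1 by simp
            then have "Ls hi (i - 2^j) = l (x i)" using LsL F1 by (simp add: Lam_def hi_def highhalf_def)
            then show ?thesis using F1 True by (simp add: tm_def)
          next
            case False
            then show ?thesis using F1 by (simp add: tm_def)
          qed
        qed
      qed
      finally show "tmap EE F U s (Suc j) x = tm (Suc j) x" .
    qed
  qed
  show ?thesis
    unfolding sc_smooth_def sck_def s_def[symmetric]
  proof (intro allI impI conjI ballI)
    fix k j x assume "j < k" "x \<in> tdom EE U j 1"
    then show "\<exists>L. sc_deriv (tscale EE j) (tscale F j) (tdom EE U j) (tmap EE F U s j) x L"
      using deriv[OF form] by blast
  next
    fix k j
    show "sc0 (tscale EE j) (tscale F j) (tdom EE U j) (tmap EE F U s j)"
      unfolding sc0_def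
    proof (intro allI conjI ballI impI)
      fix m
      have sub: "tdom EE U j m \<subseteq> tdom EE U j 0" by (rule tdom_mono[OF NE GN]) simp
      show "tmap EE F U s j ` tdom EE U j m \<subseteq> lev (tscale F j) m"
        using form sub tm_lev by auto
      fix x and e :: real assume x: "x \<in> tdom EE U j m" and e: "e > 0"
      show "\<exists>d>0. \<forall>y\<in>tdom EE U j m. nrm (tscale EE j) m (y - x) < d \<longrightarrow>
          nrm (tscale F j) m (tmap EE F U s j y - tmap EE F U s j x) < e"
      proof (intro exI[of _ "e / (BS j m + 1)"] conjI ballI impI)
        show "e / (BS j m + 1) > 0" using e BS0[of j m] by simp
        fix y assume y: "y \<in> tdom EE U j m" and yd: "nrm (tscale EE j) m (y - x) < e / (BS j m + 1)"
        have yx: "y - x \<in> lev (tscale EE j) m" using x y unfolding tdom_def by (intro nl_diff[OF NTE]) auto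
        have "nrm (tscale F j) m (tmap EE F U s j y - tmap EE F U s j x) = nrm (tscale F j) m (Lam j (y - x))"
        proof -
          have "x \<in> tdom EE U j 0" "y \<in> tdom EE U j 0" using x y sub by auto
          then show ?thesis using form[of j] tm_diff[of j y x] by simp
        qed
        also have "\<dots> \<le> BS j m * nrm (tscale EE j) m (y - x)" using Lam_bound[OF yx] .
        also have "\<dots> \<le> BS j m * (e / (BS j m + 1))" using yd BS0[of j m] by (intro mult_left_mono) auto
        also have "\<dots> < e" using e BS0[of j m] by (simp add: field_simps)
        finally show "nrm (tscale F j) m (tmap EE F U s j y - tmap EE F U s j x) < e" .
      qed
    qed
  qed
qed

end

lemma sq1: "0 \<le> (b::real) \<Longrightarrow> b \<le> sqrt (a\<^sup>2 + b\<^sup>2)"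
  by (rule real_le_rsqrt) simp
lemma sq2: "\<bar>a::real\<bar> \<le> sqrt (a\<^sup>2 + b\<^sup>2)"
  by (rule real_le_rsqrt) simp
lemma sq3: "0 \<le> (a::real) \<Longrightarrow> 0 \<le> b \<Longrightarrow> sqrt (a\<^sup>2 + b\<^sup>2) \<le> a + b"
  by (rule real_le_lsqrt) (auto simp: power2_eq_square algebra_simps)
lemma sq4: "0 \<le> (b::real) \<Longrightarrow> sqrt (0 + b\<^sup>2) = b" by simp
lemma sq5: "sqrt ((a::real)\<^sup>2 + 0) = \<bar>a\<bar>" by simp

lemma dim_first:
  "dim ((UNIV :: (real ^ 'n) set) \<times> {0::'w::real_vector}) = CARD('n)"
proof -
  have eq: "(UNIV :: (real ^ 'n) set) \<times> {0::'w} = (\<lambda>v. (v, 0)) ` UNIV" by auto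
  have "linear (\<lambda>v::real^'n. (v, 0::'w))" by (rule linearI) auto
  then have "dim ((\<lambda>v. (v, 0::'w::real_vector)) ` (UNIV :: (real^'n) set)) = dim (UNIV :: (real^'n) set)"
    by (intro dim_image_eq) (auto simp: inj_on_def)
  then show ?thesis unfolding eq by simp
qed

lemma findim_first:
  "findim ((UNIV :: (real ^ 'n) set) \<times> {0::'w::real_vector})"
proof -
  have lin: "linear (\<lambda>v::real^'n. (v, 0::'w))" by (rule linearI) auto
  have "span ((\<lambda>v. (v, 0::'w)) ` Basis) = (\<lambda>v. (v, 0)) ` span (Basis :: (real^'n) set)"
    by (rule span_linear_image[OF lin])
  also have "\<dots> = UNIV \<times> {0}" by (auto simp: span_Basis)
  finally show ?thesis unfolding findim_def by (intro exI[of _ "(\<lambda>v. (v, 0::'w)) ` Basis"]) auto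
qed

lemma lconv_prod:
  assumes NW: "normlike (W::'w::real_vector scale)" and X: "\<And>i. X i \<in> lev (prod_scale (const_scale::'v::real_normed_vector scale) W) m"
    and x: "x \<in> lev (prod_scale (const_scale::'v scale) W) m" and c: "lconv (prod_scale (const_scale::'v scale) W) m X x"
  shows "\<forall>e>0. \<exists>N. \<forall>i\<ge>N. nrm W m (snd (X i) - snd x) < e \<and> norm (fst (X i) - fst x) < e"
proof (intro allI impI)
  fix e :: real assume e: "e > 0"
  obtain N where N: "\<And>i. i \<ge> N \<Longrightarrow> nrm (prod_scale const_scale W) m (X i - x) < e"
    using c e unfolding lconv_def by blast
  show "\<exists>N. \<forall>i\<ge>N. nrm W m (snd (X i) - snd x) < e \<and> norm (fst (X i) - fst x) < e"
  proof (intro exI[of _ N] allI impI conjI)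
    fix i assume i: "i \<ge> N"
    have nn: "0 \<le> nrm W m (snd (X i) - snd x)"
      using X[of i] x by (intro nl_nonneg[OF NW] nl_diff[OF NW]) (auto simp: mem_Times_iff)
    have eq: "nrm (prod_scale (const_scale::'v scale) W) m (X i - x) = sqrt ((norm (fst (X i) - fst x))\<^sup>2 + (nrm W m (snd (X i) - snd x))\<^sup>2)"
      by simp
    show "nrm W m (snd (X i) - snd x) < e"
      using N[OF i] sq1[OF nn, of "norm (fst (X i) - fst x)"] unfolding eq by linarith
    show "norm (fst (X i) - fst x) < e"
      using N[OF i] sq2[of "norm (fst (X i) - fst x)" "nrm W m (snd (X i) - snd x)"] unfolding eq by linarith
  qed
qed

lemma small_zero: assumes "\<And>e. e > 0 \<Longrightarrow> (a::real) < e" shows "a \<le> 0"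
  using assms[of a] by (cases "a > 0") auto

lemma fredholm_part:
  fixes W :: "'w::banach scale" and c :: "'w \<Rightarrow> real ^ 'N::finite" and B0 :: real
  assumes SB: "sc_banach W" and lin: "linear c" and cb: "\<And>w. norm (c w) \<le> B0 * norm w" and B0: "B0 \<ge> 0"
  shows "sc_fredholm_index (prod_scale (const_scale::(real ^ 'n::finite) scale) W)
           (prod_scale (const_scale::(real ^ 'N) scale) W) (\<lambda>x. (c (snd x), snd x))
           (int CARD('n) - int CARD('N))"
proof -
  note NW = scb_normlike[OF SB]
  define T :: "(real ^ 'n) \<times> 'w \<Rightarrow> (real ^ 'N) \<times> 'w" where "T = (\<lambda>x. (c (snd x), snd x))"
  let ?E = "prod_scale (const_scale::(real ^ 'n) scale) W"
  let ?F = "prod_scale (const_scale::(real ^ 'N) scale) W"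
  have "\<forall>m. \<exists>C. C \<ge> 0 \<and> (\<forall>x\<in>lev W m. norm x \<le> C * nrm W m x)" using scb_incl0[OF SB] by blast
  from choice[OF this] obtain Cm where Cm': "\<forall>m. Cm m \<ge> 0 \<and> (\<forall>x\<in>lev W m. norm x \<le> Cm m * nrm W m x)" by blast
  have Cm: "\<And>m. Cm m \<ge> 0" "\<And>m w. w \<in> lev W m \<Longrightarrow> norm w \<le> Cm m * nrm W m w" using Cm' by auto
  define K0 where "K0 m = B0 * Cm m + 1" for m
  have K0: "K0 m \<ge> 1" for m unfolding K0_def using B0 Cm(1)[of m] by simp
  have cbm: "norm (c w) \<le> B0 * Cm m * nrm W m w" if "w \<in> lev W m" for w m
  proof -
    have "norm (c w) \<le> B0 * norm w" by (rule cb)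
    also have "\<dots> \<le> B0 * (Cm m * nrm W m w)" using Cm(2)[OF that] B0 by (intro mult_left_mono)
    finally show ?thesis by (simp add: mult.assoc)
  qed
  have Tb: "nrm ?F m (T (v, w)) \<le> K0 m * nrm W m w" if w: "w \<in> lev W m" for v w m
  proof -
    have nn: "0 \<le> nrm W m w" using nl_nonneg[OF NW w] .
    have "nrm ?F m (T (v, w)) = sqrt ((norm (c w))\<^sup>2 + (nrm W m w)\<^sup>2)" unfolding T_def by simp
    also have "\<dots> \<le> norm (c w) + nrm W m w" using nn by (intro sq3) auto
    also have "\<dots> \<le> B0 * Cm m * nrm W m w + nrm W m w" using cbm[OF w] by simp
    also have "\<dots> = K0 m * nrm W m w" unfolding K0_def by (simp add: algebra_simps)
    finally show ?thesis .
  qed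
  have nW_le: "nrm W m w \<le> nrm ?F m (z, w)" if "w \<in> lev W m" for z w m
    using sq1[OF nl_nonneg[OF NW that]] by simp
  have nW_leE: "nrm W m w \<le> nrm ?E m (v, w)" if "w \<in> lev W m" for v w m
    using sq1[OF nl_nonneg[OF NW that]] by simp
  have c0: "c 0 = 0" using linear_0[OF lin] .
  have op: "sc_operator ?E ?F T"
    unfolding sc_operator_def
  proof (intro conjI allI ballI)
    fix h1 h2 :: "(real ^ 'n) \<times> 'w" and a :: real
    show "T (h1 + h2) = T h1 + T h2" unfolding T_def by (simp add: linear_add[OF lin])
    show "T (a *\<^sub>R h1) = a *\<^sub>R T h1" unfolding T_def by (simp add: linear_scale[OF lin])
  next
    fix m and x :: "(real ^ 'n) \<times> 'w" assume "x \<in> lev ?E m"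
    then show "T x \<in> lev ?F m" unfolding T_def by (auto simp: mem_Times_iff)
  next
    fix m
    show "\<exists>B. \<forall>x\<in>lev ?E m. nrm ?F m (T x) \<le> B * nrm ?E m x"
    proof (intro exI[of _ "K0 m"] ballI)
      fix x :: "(real ^ 'n) \<times> 'w" assume x: "x \<in> lev ?E m"
      then have w: "snd x \<in> lev W m" by (auto simp: mem_Times_iff)
      have "nrm ?F m (T x) \<le> K0 m * nrm W m (snd x)" using Tb[OF w, of "fst x"] by simp
      also have "\<dots> \<le> K0 m * nrm ?E m x" using nW_leE[OF w, of "fst x"] K0[of m] by (intro mult_left_mono) auto
      finally show "nrm ?F m (T x) \<le> K0 m * nrm ?E m x" .
    qed
  qed
  define K :: "((real ^ 'n) \<times> 'w) set" where "K = UNIV \<times> {0}"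
  define X :: "((real ^ 'n) \<times> 'w) set" where "X = {0} \<times> UNIV"
  define Y where "Y = range (\<lambda>w. (c w, w))"
  define C :: "((real ^ 'N) \<times> 'w) set" where "C = UNIV \<times> {0}"
  have Keq: "K = {x\<in>lev ?E 0. T x = 0}" unfolding K_def T_def using c0 by (auto simp: zero_prod_def scb_lev0[OF SB])
  have Yeq: "Y = T ` X" unfolding Y_def X_def T_def
    by (auto simp: image_iff)
  have lclK: "lclosed ?E m (K \<inter> lev ?E m)" for m
    unfolding lclosed_def
  proof (intro allI impI)
    fix Xs x assume a: "(\<forall>i. Xs i \<in> K \<inter> lev ?E m) \<and> x \<in> lev ?E m \<and> lconv ?E m Xs x"
    then have L: "\<forall>e>0. \<exists>N. \<forall>i\<ge>N. nrm W m (snd (Xs i) - snd x) < e \<and> norm (fst (Xs i) - fst x) < e"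
      by (intro lconv_prod[OF NW]) auto
    have sx: "snd x \<in> lev W m" using a by (auto simp: mem_Times_iff)
    have "nrm W m (snd x) \<le> 0"
    proof (rule small_zero)
      fix e :: real assume "e > 0"
      then obtain N where "\<forall>i\<ge>N. nrm W m (snd (Xs i) - snd x) < e" using L by blast
      moreover have "snd (Xs N) = 0" using a unfolding K_def by (auto simp: mem_Times_iff)
      ultimately show "nrm W m (snd x) < e" using nl_minus[OF NW sx] by auto
    qed
    then have "snd x = 0" using nl_nonneg[OF NW sx] nl_eq0[OF NW sx] by simp
    then show "x \<in> K \<inter> lev ?E m" using a unfolding K_def by (auto simp: mem_Times_iff)
  qed
  have lclC: "lclosed ?F m (C \<inter> lev ?F m)" for m
    unfolding lclosed_def
  proof (intro allI impI)
    fix Xs x assume a: "(\<forall>i. Xs i \<in> C \<inter> lev ?F m) \<and> x \<in> lev ?F m \<and> lconv ?F m Xs x"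
    then have L: "\<forall>e>0. \<exists>N. \<forall>i\<ge>N. nrm W m (snd (Xs i) - snd x) < e \<and> norm (fst (Xs i) - fst x) < e"
      by (intro lconv_prod[OF NW]) auto
    have sx: "snd x \<in> lev W m" using a by (auto simp: mem_Times_iff)
    have "nrm W m (snd x) \<le> 0"
    proof (rule small_zero)
      fix e :: real assume "e > 0"
      then obtain N where "\<forall>i\<ge>N. nrm W m (snd (Xs i) - snd x) < e" using L by blast
      moreover have "snd (Xs N) = 0" using a unfolding C_def by (auto simp: mem_Times_iff)
      ultimately show "nrm W m (snd x) < e" using nl_minus[OF NW sx] by auto
    qed
    then have "snd x = 0" using nl_nonneg[OF NW sx] nl_eq0[OF NW sx] by simp
    then show "x \<in> C \<inter> lev ?F m" using a unfolding C_def by (auto simp: mem_Times_iff)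
  qed
  have lclX: "lclosed ?E m (X \<inter> lev ?E m)" for m
    unfolding lclosed_def
  proof (intro allI impI)
    fix Xs x assume a: "(\<forall>i. Xs i \<in> X \<inter> lev ?E m) \<and> x \<in> lev ?E m \<and> lconv ?E m Xs x"
    then have L: "\<forall>e>0. \<exists>N. \<forall>i\<ge>N. nrm W m (snd (Xs i) - snd x) < e \<and> norm (fst (Xs i) - fst x) < e"
      by (intro lconv_prod[OF NW]) auto
    have "norm (fst x) \<le> 0"
    proof (rule small_zero)
      fix e :: real assume "e > 0"
      then obtain N where "\<forall>i\<ge>N. norm (fst (Xs i) - fst x) < e" using L by blast
      moreover have "fst (Xs N) = 0" using a unfolding X_def by (auto simp: mem_Times_iff)
      ultimately show "norm (fst x) < e" by auto
    qed
    then have "fst x = 0" by simp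
    then show "x \<in> X \<inter> lev ?E m" using a unfolding X_def by (auto simp: mem_Times_iff)
  qed
  have lclY: "lclosed ?F m (Y \<inter> lev ?F m)" for m
    unfolding lclosed_def
  proof (intro allI impI)
    fix Xs x assume a: "(\<forall>i. Xs i \<in> Y \<inter> lev ?F m) \<and> x \<in> lev ?F m \<and> lconv ?F m Xs x"
    then have L: "\<forall>e>0. \<exists>N. \<forall>i\<ge>N. nrm W m (snd (Xs i) - snd x) < e \<and> norm (fst (Xs i) - fst x) < e"
      by (intro lconv_prod[OF NW]) auto
    have sx: "snd x \<in> lev W m" using a by (auto simp: mem_Times_iff)
    have XY1: "fst (Xs i) = c (snd (Xs i))" for i
    proof -
      have "Xs i \<in> Y" using a by blast
      then obtain w where "Xs i = (c w, w)" unfolding Y_def by blast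
      then show ?thesis by simp
    qed
    have XY2: "snd (Xs i) \<in> lev W m" for i using a by (auto simp: mem_Times_iff)
    note XY = XY1 XY2
    have "norm (c (snd x) - fst x) \<le> 0"
    proof (rule small_zero)
      fix e :: real assume e: "e > 0"
      define e' where "e' = e / (2 * (B0 * Cm m + 1))"
      have e': "e' > 0" unfolding e'_def using e B0 Cm(1)[of m] by (intro divide_pos_pos) (auto intro: add_nonneg_pos mult_nonneg_nonneg)
      obtain N where N: "\<forall>i\<ge>N. nrm W m (snd (Xs i) - snd x) < e' \<and> norm (fst (Xs i) - fst x) < e'"
        using L e' by blast
      have d: "snd x - snd (Xs N) \<in> lev W m" using nl_diff[OF NW sx XY(2)] .
      have t1: "norm (c (snd x) - fst x) \<le> norm (c (snd x) - c (snd (Xs N))) + norm (fst (Xs N) - fst x)"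
        using XY(1)[of N] norm_triangle_ineq[of "c (snd x) - c (snd (Xs N))" "fst (Xs N) - fst x"] by simp
      have t2: "norm (c (snd x) - c (snd (Xs N))) \<le> B0 * Cm m * nrm W m (snd (Xs N) - snd x)"
        using cbm[OF d] nl_commute[OF NW sx XY(2)] by (simp add: linear_diff[OF lin])
      have n1: "nrm W m (snd (Xs N) - snd x) < e'" and n2: "norm (fst (Xs N) - fst x) < e'" using N by auto
      have t3: "B0 * Cm m * nrm W m (snd (Xs N) - snd x) \<le> B0 * Cm m * e'"
        using n1 B0 Cm(1)[of m] by (intro mult_left_mono) auto
      have "norm (c (snd x) - fst x) \<le> B0 * Cm m * e' + e'" using t1 t2 t3 n2 by linarith
      also have "\<dots> = (B0 * Cm m + 1) * e'" by (simp add: algebra_simps)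
      also have "\<dots> = e / 2"
      proof -
        have "0 \<le> B0 * Cm m" using B0 Cm(1)[of m] by simp
        then have p: "B0 * Cm m + 1 \<noteq> 0" by linarith
        then show ?thesis unfolding e'_def by (simp add: field_simps)
      qed
      also have "\<dots> < e" using e by simp
      finally show "norm (c (snd x) - fst x) < e" .
    qed
    then have "fst x = c (snd x)" by simp
    then have "x = (c (snd x), snd x)" by (simp add: prod_eq_iff)
    then have "x \<in> Y" unfolding Y_def by (rule range_eqI)
    then show "x \<in> Y \<inter> lev ?F m" using a by blast
  qed
  have splE: "sc_splitting ?E K X"
    unfolding sc_splitting_def
  proof (intro conjI allI ballI)
    show "subspace K" unfolding K_def subspace_def by (auto simp: zero_prod_def)
    show "subspace X" unfolding X_def subspace_def by (auto simp: zero_prod_def)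
    show "K \<subseteq> lev ?E 0" "X \<subseteq> lev ?E 0" by (auto simp: scb_lev0[OF SB])
    show "K \<inter> X = {0}" unfolding K_def X_def by (auto simp: zero_prod_def)
  next
    fix m and x :: "(real ^ 'n) \<times> 'w" assume x: "x \<in> lev ?E m"
    show "\<exists>a\<in>K \<inter> lev ?E m. \<exists>b\<in>X \<inter> lev ?E m. x = a + b"
      using x nl_zero[OF NW, of m] unfolding K_def X_def
      by (intro bexI[of _ "(fst x, 0)"] bexI[of _ "(0, snd x)"]) (auto simp: mem_Times_iff)
  next
    fix m show "lclosed ?E m (K \<inter> lev ?E m)" by (rule lclK)
    show "lclosed ?E m (X \<inter> lev ?E m)" by (rule lclX)
    show "\<exists>Kc. \<forall>a\<in>K \<inter> lev ?E m. \<forall>b\<in>X \<inter> lev ?E m. nrm ?E m a \<le> Kc * nrm ?E m (a + b) \<and> nrm ?E m b \<le> Kc * nrm ?E m (a + b)"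
    proof (intro exI[of _ 1] ballI conjI)
      fix a b assume a: "a \<in> K \<inter> lev ?E m" and b: "b \<in> X \<inter> lev ?E m"
      obtain v where av: "a = (v, 0)" using a unfolding K_def by auto
      obtain w where bw: "b = (0, w)" "w \<in> lev W m" using b unfolding X_def by (cases b) auto
      show "nrm ?E m a \<le> 1 * nrm ?E m (a + b)" using av bw sq2[of "norm v" "nrm W m w"] by (simp add: nl_nrm0[OF NW])
      show "nrm ?E m b \<le> 1 * nrm ?E m (a + b)" using av bw nW_leE[of w m v] nl_nonneg[OF NW bw(2)] by (simp add: nl_nrm0[OF NW])
    qed
  qed
  have splF: "sc_splitting ?F Y C"
    unfolding sc_splitting_def
  proof (intro conjI allI ballI)
    show "subspace Y" unfolding subspace_def Y_def
    proof (intro conjI ballI allI)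
      show "0 \<in> range (\<lambda>w. (c w, w))" using c0 by (intro range_eqI[of _ _ 0]) (simp add: zero_prod_def)
    next
      fix x y assume "x \<in> range (\<lambda>w. (c w, w))" "y \<in> range (\<lambda>w. (c w, w))"
      then obtain a b where "x = (c a, a)" "y = (c b, b)" by blast
      then show "x + y \<in> range (\<lambda>w. (c w, w))" by (intro range_eqI[of _ _ "a + b"]) (simp add: linear_add[OF lin])
    next
      fix r x assume "x \<in> range (\<lambda>w. (c w, w))"
      then obtain a where "x = (c a, a)" by blast
      then show "r *\<^sub>R x \<in> range (\<lambda>w. (c w, w))" by (intro range_eqI[of _ _ "r *\<^sub>R a"]) (simp add: linear_scale[OF lin])
    qed
    show "subspace C" unfolding C_def subspace_def by (auto simp: zero_prod_def)
    show "Y \<subseteq> lev ?F 0" "C \<subseteq> lev ?F 0" by (auto simp: scb_lev0[OF SB])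
    show "Y \<inter> C = {0}" unfolding Y_def C_def using range_eqI[of "(0,0)" "\<lambda>w. (c w, w)" 0] by (auto simp: zero_prod_def c0)
  next
    fix m and x :: "(real ^ 'N) \<times> 'w" assume x: "x \<in> lev ?F m"
    show "\<exists>a\<in>Y \<inter> lev ?F m. \<exists>b\<in>C \<inter> lev ?F m. x = a + b"
      using x nl_zero[OF NW, of m] unfolding Y_def C_def
      by (intro bexI[of _ "(c (snd x), snd x)"] bexI[of _ "(fst x - c (snd x), 0)"]) (auto simp: mem_Times_iff)
  next
    fix m show "lclosed ?F m (Y \<inter> lev ?F m)" by (rule lclY)
    show "lclosed ?F m (C \<inter> lev ?F m)" by (rule lclC)
    show "\<exists>Kc. \<forall>a\<in>Y \<inter> lev ?F m. \<forall>b\<in>C \<inter> lev ?F m. nrm ?F m a \<le> Kc * nrm ?F m (a + b) \<and> nrm ?F m b \<le> Kc * nrm ?F m (a + b)"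
    proof (intro exI[of _ "K0 m"] ballI conjI)
      fix a b assume a: "a \<in> Y \<inter> lev ?F m" and b: "b \<in> C \<inter> lev ?F m"
      obtain w where aw: "a = (c w, w)" "w \<in> lev W m" using a unfolding Y_def by auto
      obtain z where bz: "b = (z, 0)" using b unfolding C_def by auto
      have ab: "a + b = (c w + z, w)" using aw bz by simp
      have n1: "nrm W m w \<le> nrm ?F m (a + b)" unfolding ab using nW_le[OF aw(2)] .
      have "nrm ?F m a = nrm ?F m (T (0, w))" unfolding aw T_def by simp
      also have "\<dots> \<le> K0 m * nrm W m w" by (rule Tb[OF aw(2)])
      also have "\<dots> \<le> K0 m * nrm ?F m (a + b)" using n1 K0[of m] by (intro mult_left_mono) auto
      finally show "nrm ?F m a \<le> K0 m * nrm ?F m (a + b)" .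
      have "nrm ?F m b = norm z" using bz by (simp add: nl_nrm0[OF NW])
      also have "\<dots> \<le> norm (c w + z) + norm (c w)" using norm_triangle_ineq4[of "c w + z" "c w"] by simp
      also have "norm (c w + z) \<le> nrm ?F m (a + b)" unfolding ab using sq2 by simp
      also have "norm (c w) \<le> B0 * Cm m * nrm W m w" by (rule cbm[OF aw(2)])
      also have "B0 * Cm m * nrm W m w \<le> B0 * Cm m * nrm ?F m (a + b)"
        using n1 B0 Cm(1)[of m] by (intro mult_left_mono) auto
      finally show "nrm ?F m b \<le> K0 m * nrm ?F m (a + b)" unfolding K0_def by (simp add: algebra_simps)
    qed
  qed
  have iso: "sc_iso_on ?E ?F X Y T"
    unfolding sc_iso_on_def
  proof (intro conjI allI)
    fix m
    show "bij_betw T (X \<inter> lev ?E m) (Y \<inter> lev ?F m)"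
      unfolding bij_betw_def
    proof
      show "inj_on T (X \<inter> lev ?E m)" unfolding inj_on_def X_def T_def by auto
      show "T ` (X \<inter> lev ?E m) = Y \<inter> lev ?F m"
        unfolding X_def Y_def T_def
      proof (auto simp: mem_Times_iff)
        fix w assume "w \<in> lev W m"
        then show "(c w, w) \<in> (\<lambda>x. (c (snd x), snd x)) ` ({0} \<times> UNIV \<inter> UNIV \<times> lev W m)"
          by (intro image_eqI[of _ _ "(0, w)"]) auto
      qed
    qed
    show "\<exists>B. \<forall>x\<in>X \<inter> lev ?E m. nrm ?F m (T x) \<le> B * nrm ?E m x \<and> nrm ?E m x \<le> B * nrm ?F m (T x)"
    proof (intro exI[of _ "K0 m"] ballI conjI)
      fix x assume x: "x \<in> X \<inter> lev ?E m"
      then obtain w where xw: "x = (0, w)" "w \<in> lev W m" unfolding X_def by (cases x) auto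
      have ne: "nrm ?E m x = nrm W m w" using xw nl_nonneg[OF NW xw(2)] by simp
      show "nrm ?F m (T x) \<le> K0 m * nrm ?E m x" using Tb[OF xw(2), of 0] ne xw(1) by simp
      have "nrm ?E m x \<le> nrm ?F m (T x)" using nW_le[OF xw(2), of "c w"] ne xw(1) unfolding T_def by simp
      also have "\<dots> \<le> K0 m * nrm ?F m (T x)"
      proof -
        have "T x \<in> lev ?F m" using xw unfolding T_def by (auto simp: mem_Times_iff)
        then have nn: "0 \<le> nrm ?F m (T x)" by (rule nl_nonneg[OF normlike_prod[OF NW]])
        show ?thesis using mult_right_mono[OF K0[of m] nn] by simp
      qed
      finally show "nrm ?E m x \<le> K0 m * nrm ?F m (T x)" .
    qed
  qed
  show ?thesis
    unfolding sc_fredholm_index_def T_def[symmetric]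
  proof (intro conjI exI)
    show "sc_operator ?E ?F T" by (rule op)
    show "sc_splitting ?E K X" by (rule splE)
    show "sc_splitting ?F Y C" by (rule splF)
    show "K = {x\<in>lev ?E 0. T x = 0}" by (rule Keq)
    show "findim K" unfolding K_def by (rule findim_first)
    show "findim C" unfolding C_def by (rule findim_first)
    show "Y = T ` X" by (rule Yeq)
    show "sc_iso_on ?E ?F X Y T" by (rule iso)
    show "int CARD('n) - int CARD('N) = int (dim K) - int (dim C)"
      unfolding K_def C_def by (simp add: dim_first)
  qed
qed


lemma tmap1_formula:
  "tmap E F U g (Suc 0) x = (\<lambda>i. if i < 1 then tmap E F U g 0 (lowhalf 0 x) i
      else if i < 2 then (SOME L. sc_deriv (tscale E 0) (tscale F 0) (tdom E U 0) (tmap E F U g 0) (lowhalf 0 x) L) (highhalf 0 x) (i - 1) else 0)"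
  by (simp add: Let_def fun_eq_iff numeral_2_eq_2)

lemma tsh1: "tsh 1 0 = 1" "tsh 1 1 = 0" by (simp_all add: numeral_eq_Suc)

declare nrm_prod[simp del]

theorem proposition3p5:
  fixes W :: "'w::banach scale"
    and J :: "'n::finite set"
    and U :: "nat \<Rightarrow> ((real ^ 'n) \<times> 'w) set"
    and g :: "(real ^ 'n) \<times> 'w \<Rightarrow> (real ^ 'N::finite) \<times> 'w"
  assumes "sc_banach W"
    and "germ_nbhd (prod_scale const_scale W) (quadrant J \<times> UNIV) U"
    and "sc_smooth (prod_scale const_scale W) (prod_scale const_scale W) U g"
    and "sc0_contraction (quadrant J) W U (\<lambda>p. snd (g p - g (0, 0)))"
  shows "lin_fredholm_index (prod_scale const_scale W) (prod_scale const_scale W) U g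
           (int CARD('n) - int CARD('N))"
proof -
  note SB = assms(1) and GN = assms(2) and SM = assms(3) and CT = assms(4)
  let ?E = "prod_scale const_scale W :: ((real ^ 'n) \<times> 'w) scale"
  let ?F = "prod_scale const_scale W :: ((real ^ 'N) \<times> 'w) scale"
  note NW = scb_normlike[OF SB]
  have NE: "normlike ?E" by (rule normlike_prod[OF NW])
  have NF: "normlike ?F" by (rule normlike_prod[OF NW])
  have lev0E: "lev ?E 0 = UNIV" and lev0F: "lev ?F 0 = UNIV" by (simp_all add: scb_lev0[OF SB])
  have sck1: "sck ?E ?F U g 1" using SM unfolding sc_smooth_def by blast
  have sc00: "sc0 (tscale ?E 0) (tscale ?F 0) (tdom ?E U 0) (tmap ?E ?F U g 0)"
    and sc01: "sc0 (tscale ?E 1) (tscale ?F 1) (tdom ?E U 1) (tmap ?E ?F U g 1)"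
    and dex: "\<forall>x\<in>tdom ?E U 0 1. \<exists>L. sc_deriv (tscale ?E 0) (tscale ?F 0) (tdom ?E U 0) (tmap ?E ?F U g 0) x L"
    using sck1 unfolding sck_def by auto
  have z0m: "(0::nat \<Rightarrow> (real ^ 'n) \<times> 'w) \<in> tdom ?E U j m" for j m
    unfolding tdom_def lev_tscale using germ_U_0[OF GN] nl_zero[OF NE] by auto
  define L1 where "L1 = (SOME L. sc_deriv (tscale ?E 0) (tscale ?F 0) (tdom ?E U 0) (tmap ?E ?F U g 0) 0 L)"
  have D1: "sc_deriv (tscale ?E 0) (tscale ?F 0) (tdom ?E U 0) (tmap ?E ?F U g 0) 0 L1"
  proof -
    obtain L where "sc_deriv (tscale ?E 0) (tscale ?F 0) (tdom ?E U 0) (tmap ?E ?F U g 0) 0 L"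
      using dex z0m by blast
    then show ?thesis unfolding L1_def
      by (rule someI[of "sc_deriv (tscale ?E 0) (tscale ?F 0) (tdom ?E U 0) (tmap ?E ?F U g 0) 0"])
  qed
  define emb :: "(real ^ 'n) \<times> 'w \<Rightarrow> nat \<Rightarrow> (real ^ 'n) \<times> 'w" where "emb z = (\<lambda>i. if i = 0 then z else 0)" for z
  define L where "L z = L1 (emb z) 0" for z
  have emb_lev: "emb z \<in> lev (tscale ?E 0) m" if "z \<in> lev ?E m" for z m
    unfolding emb_def lev_tscale using that nl_zero[OF NE] by auto
  have emb_lev0: "emb z \<in> lev (tscale ?E 0) 0" for z using emb_lev[of z 0] lev0E by simp
  have emb_add: "emb (a + b) = emb a + emb b" for a b unfolding emb_def fun_eq_iff by simp
  have emb_scale: "emb (r *\<^sub>R a) = r *\<^sub>R emb a" for r a unfolding emb_def fun_eq_iff by simp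
  have L_add: "L (a + b) = L a + L b" for a b
    unfolding L_def emb_add using sc_derivD(2)[OF D1 emb_lev0 emb_lev0] by simp
  have L_scale: "L (r *\<^sub>R a) = r *\<^sub>R L a" for r a
    unfolding L_def emb_scale using sc_derivD(3)[OF D1 emb_lev0] by simp
  have linL: "linear L" by (rule linearI) (auto simp: L_add L_scale)
  have L0: "L 0 = 0" using linear_0[OF linL] .
  have L10: "L1 0 = 0"
  proof -
    have "L1 ((0::real) *\<^sub>R 0) = 0 *\<^sub>R L1 0" using sc_derivD(3)[OF D1, of 0 0] nl_zero[OF normlike_tscale[OF NE]] by blast
    then show ?thesis by simp
  qed
  have LD: "sc_deriv ?E ?F U g 0 L"
    unfolding sc_deriv_def
  proof (intro conjI ballI allI impI)
    fix h show "L h \<in> lev ?F 0" using lev0F by simp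
  next
    fix h1 h2 :: "(real ^ 'n) \<times> 'w" and r :: real
    show "L (h1 + h2) = L h1 + L h2" by (rule L_add)
    show "L (r *\<^sub>R h1) = r *\<^sub>R L h1" by (rule L_scale)
  next
    obtain B where B: "\<forall>h\<in>lev (tscale ?E 0) 0. nrm (tscale ?F 0) 0 (L1 h) \<le> B * nrm (tscale ?E 0) 0 h"
      using sc_derivD(4)[OF D1] by blast
    show "\<exists>B. \<forall>h\<in>lev ?E 0. nrm ?F 0 (L h) \<le> B * nrm ?E 0 h"
    proof (intro exI[of _ B] ballI)
      fix h :: "(real ^ 'n) \<times> 'w"
      have "nrm (tscale ?F 0) 0 (L1 (emb h)) \<le> B * nrm (tscale ?E 0) 0 (emb h)" using B emb_lev0 by blast
      then show "nrm ?F 0 (L h) \<le> B * nrm ?E 0 h" unfolding L_def nrm_tscale by (simp add: emb_def)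
    qed
  next
    fix e :: real assume e: "e > 0"
    obtain d where d: "d > 0" "\<forall>h. 0 + h \<in> tdom ?E U 0 1 \<and> nrm (tscale ?E 0) 1 h < d \<longrightarrow>
        nrm (tscale ?F 0) 0 (tmap ?E ?F U g 0 (0 + h) - tmap ?E ?F U g 0 0 - L1 h) \<le> e * nrm (tscale ?E 0) 1 h"
      using sc_derivD(5)[OF D1 e] by blast
    show "\<exists>d>0. \<forall>h. 0 + h \<in> U 1 \<and> nrm ?E 1 h < d \<longrightarrow> nrm ?F 0 (g (0 + h) - g 0 - L h) \<le> e * nrm ?E 1 h"
    proof (intro exI[of _ d] conjI allI impI)
      show "d > 0" by (rule d(1))
      fix h assume h: "0 + h \<in> U 1 \<and> nrm ?E 1 h < d"
      have hl: "h \<in> lev ?E 1" using germ_U_lev[OF GN] h by auto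
      have "emb h \<in> tdom ?E U 0 1" unfolding tdom_def using emb_lev[OF hl] h by (simp add: emb_def)
      moreover have "nrm (tscale ?E 0) 1 (emb h) = nrm ?E 1 h" unfolding nrm_tscale by (simp add: emb_def)
      ultimately have "nrm (tscale ?F 0) 0 (tmap ?E ?F U g 0 (emb h) - tmap ?E ?F U g 0 0 - L1 (emb h)) \<le> e * nrm ?E 1 h"
        using d(2) h by (metis add_0)
      then show "nrm ?F 0 (g (0 + h) - g 0 - L h) \<le> e * nrm ?E 1 h"
        unfolding nrm_tscale L_def by (simp add: emb_def)
    qed
  qed
  \<comment> \<open>level structure of L from T g\<close>
  define emb1 :: "(real ^ 'n) \<times> 'w \<Rightarrow> nat \<Rightarrow> (real ^ 'n) \<times> 'w" where "emb1 z = (\<lambda>i. if i = 1 then z else 0)" for z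
  have lo_e: "lowhalf 0 (emb1 h) = 0" for h unfolding lowhalf_def emb1_def fun_eq_iff by simp
  have hi_e: "highhalf 0 (emb1 h) = emb h" for h unfolding highhalf_def emb1_def emb_def fun_eq_iff by simp
  have lo_0: "lowhalf 0 (0::nat \<Rightarrow> (real ^ 'n) \<times> 'w) = 0" unfolding lowhalf_def fun_eq_iff by simp
  have hi_0: "highhalf 0 (0::nat \<Rightarrow> (real ^ 'n) \<times> 'w) = 0" unfolding highhalf_def fun_eq_iff by simp
  have T1: "tmap ?E ?F U g 1 (emb1 h) = (\<lambda>i. if i < 1 then tmap ?E ?F U g 0 0 i else if i < 2 then L1 (emb h) (i - 1) else 0)" for h
    unfolding One_nat_def tmap1_formula lo_e hi_e L1_def by simp
  have T10: "tmap ?E ?F U g 1 0 = (\<lambda>i. if i < 1 then tmap ?E ?F U g 0 0 i else if i < 2 then L1 0 (i - 1) else 0)"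
    unfolding One_nat_def tmap1_formula lo_0 hi_0 L1_def by simp
  have emb1_dom: "emb1 h \<in> tdom ?E U 1 m" if "h \<in> lev ?E m" for h m
  proof -
    have "emb1 h \<in> lev (tscale ?E 1) m" unfolding lev_tscale emb1_def
    proof (intro conjI allI impI)
      fix i :: nat assume "i < 2^1"
      then have "i = 0 \<or> i = 1" by auto
      then show "(if i = 1 then h else 0) \<in> lev ?E (m + tsh 1 i)"
        using that nl_zero[OF NE] by (auto simp: tsh1)
    qed auto
    then show ?thesis unfolding tdom_def using germ_U_0[OF GN] by (simp add: emb1_def)
  qed
  have Llev: "L h \<in> lev ?F m" if "h \<in> lev ?E m" for h m
  proof -
    have "tmap ?E ?F U g 1 (emb1 h) \<in> lev (tscale ?F 1) m" using sc01 emb1_dom[OF that] unfolding sc0_def by blast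
    then have "(\<lambda>i. if i < 1 then tmap ?E ?F U g 0 0 i else if i < 2 then L1 (emb h) (i - 1) else 0) \<in> lev (tscale ?F 1) m"
      unfolding T1 .
    then have "L1 (emb h) 0 \<in> lev ?F (m + tsh 1 1)" unfolding lev_tscale by (auto simp del: tsh.simps dest: spec[of _ 1])
    then show ?thesis unfolding L_def by (simp add: tsh1)
  qed
  have Lbd: "\<exists>B\<ge>0. \<forall>h\<in>lev ?E m. nrm ?F m (L h) \<le> B * nrm ?E m h" for m
  proof -
    obtain dl where dl: "dl > 0" "\<forall>y\<in>tdom ?E U 1 m. nrm (tscale ?E 1) m (y - 0) < dl \<longrightarrow>
        nrm (tscale ?F 1) m (tmap ?E ?F U g 1 y - tmap ?E ?F U g 1 0) < 1"
      using sc01 z0m unfolding sc0_def by (meson zero_less_one)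
    have small: "nrm ?F m (L h) < 1" if h: "h \<in> lev ?E m" "nrm ?E m h < dl" for h
    proof -
      have "nrm (tscale ?E 1) m (emb1 h - 0) = nrm ?E m h"
        unfolding nrm_tscale using nl_nrm0[OF NE]
        by (simp add: emb1_def numeral_2_eq_2 tsh1 lessThan_Suc del: nrm_prod)
      then have lt: "nrm (tscale ?F 1) m (tmap ?E ?F U g 1 (emb1 h) - tmap ?E ?F U g 1 0) < 1"
        using dl(2) emb1_dom[OF h(1)] h(2) by simp
      have diff: "tmap ?E ?F U g 1 (emb1 h) - tmap ?E ?F U g 1 0 = (\<lambda>i. if i = 1 then L h else 0)"
        unfolding T1 T10 by (auto simp: fun_eq_iff L_def L10)
      have "nrm (tscale ?F 1) m (\<lambda>i. if i = 1 then L h else 0) = nrm ?F m (L h)"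
        unfolding nrm_tscale using nl_nrm0[OF NF]
        by (simp add: numeral_2_eq_2 tsh1 lessThan_Suc del: nrm_prod)
      then show ?thesis using lt unfolding diff by simp
    qed
    show ?thesis
    proof (intro exI[of _ "2 / dl"] conjI ballI)
      show "0 \<le> 2 / dl" using dl by simp
      fix h assume h: "h \<in> lev ?E m"
      show "nrm ?F m (L h) \<le> 2 / dl * nrm ?E m h"
      proof (cases "h = 0")
        case True then show ?thesis using L0 nl_nrm0[OF NF] nl_nrm0[OF NE] by simp
      next
        case False
        then have hp: "nrm ?E m h > 0" using nl_nonneg[OF NE h] nl_eq0[OF NE h] by (simp del: nrm_prod)
        define r where "r = dl / (2 * nrm ?E m h)"
        have r: "r > 0" unfolding r_def using dl hp by simp
        have rh: "r *\<^sub>R h \<in> lev ?E m" using nl_scale[OF NE h] .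
        have "nrm ?E m (r *\<^sub>R h) = dl / 2" using nl_hom[OF NE h, of r] r hp dl(1) unfolding r_def by simp
        then have "nrm ?F m (L (r *\<^sub>R h)) < 1" using small[OF rh] dl by simp
        moreover have "nrm ?F m (L (r *\<^sub>R h)) = r * nrm ?F m (L h)"
          using L_scale nl_hom[OF NF Llev[OF h], of r] r by simp
        ultimately have "r * nrm ?F m (L h) < 1" by simp
        then have "nrm ?F m (L h) < 1 / r" using r by (simp add: field_simps)
        also have "1 / r = 2 / dl * nrm ?E m h" unfolding r_def using dl hp by simp
        finally show ?thesis by simp
      qed
    qed
  qed
  have g0lev: "g 0 \<in> lev ?F m" for m
  proof -
    have "tmap ?E ?F U g 0 0 \<in> lev (tscale ?F 0) m" using sc00 z0m unfolding sc0_def by blast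
    then show ?thesis unfolding lev_tscale by simp
  qed
  \<comment> \<open>the contraction property forces the W-part of D_w g(0) to be the identity\<close>
  obtain B0 where B0: "B0 \<ge> 0" "\<forall>h\<in>lev ?E 0. nrm ?F 0 (L h) \<le> B0 * nrm ?E 0 h" using Lbd[of 0] by blast
  have nrmF0_snd: "norm (snd p) \<le> nrm ?F 0 p" for p :: "(real ^ 'N) \<times> 'w"
    using sq1[of "norm (snd p)" "norm (fst p)"] by (simp add: nrm_prod scb_nrm0[OF SB])
  have nrmF0_fst: "norm (fst p) \<le> nrm ?F 0 p" for p :: "(real ^ 'N) \<times> 'w"
    using sq2[of "norm (fst p)" "norm (snd p)"] by (simp add: nrm_prod scb_nrm0[OF SB])
  have nrmE_0w: "nrm ?E m (0, w) = nrm W m w" if "w \<in> lev W m" for w m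
    using nl_nonneg[OF NW that] by (simp add: nrm_prod)
  have nrmE_v0: "nrm ?E m (v, 0) = norm v" for v m
    using nl_nrm0[OF NW] by (simp add: nrm_prod)
  have CT0: "\<exists>d>0. \<forall>v w w'. (v, w) \<in> U 0 \<and> (v, w') \<in> U 0 \<and> norm v < d \<and> norm w < d \<and> norm w' < d \<longrightarrow>
      norm ((w - snd (g (v, w) - g (0, 0))) - (w' - snd (g (v, w') - g (0, 0)))) \<le> e * norm (w - w')"
    if "0 < e" "e < 1" for e
  proof -
    have "\<exists>d>0. \<forall>v w w'. (v, w) \<in> U 0 \<and> (v, w') \<in> U 0 \<and> norm v < d \<and> nrm W 0 w < d \<and> nrm W 0 w' < d \<longrightarrow>
      nrm W 0 ((w - snd (g (v, w) - g (0, 0))) - (w' - snd (g (v, w') - g (0, 0)))) \<le> e * nrm W 0 (w - w')"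
      using CT that unfolding sc0_contraction_def by blast
    then show ?thesis by (simp only: scb_nrm0[OF SB])
  qed
  have Lid1: "norm (w - snd (L (0, w))) \<le> e * (norm w + nrm W 1 w)" if w: "w \<in> lev W 1" and e: "0 < e" "e < 1" for w e
  proof -
    obtain dc where dc: "dc > 0" "\<forall>v w w'. (v, w) \<in> U 0 \<and> (v, w') \<in> U 0 \<and> norm v < dc \<and> norm w < dc \<and> norm w' < dc \<longrightarrow>
      norm ((w - snd (g (v, w) - g (0, 0))) - (w' - snd (g (v, w') - g (0, 0)))) \<le> e * norm (w - w')"
      using CT0[OF e] by blast
    obtain dd where dd: "dd > 0" "\<forall>h. 0 + h \<in> U 1 \<and> nrm ?E 1 h < dd \<longrightarrow> nrm ?F 0 (g (0 + h) - g 0 - L h) \<le> e * nrm ?E 1 h"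
      using sc_derivD(5)[OF LD e(1)] by blast
    obtain dl where dl: "dl > 0" "\<forall>y\<in>(quadrant J \<times> UNIV) \<inter> lev ?E 1. nrm ?E 1 (y - 0) < dl \<longrightarrow> y \<in> U 1"
      using GN germ_U_0[OF GN, of 1] unfolding germ_nbhd_def by blast
    have ev: "\<forall>\<^sub>F t in at_right (0::real). t \<in> {0<..<1} \<and> t * norm w < dc \<and> t * nrm W 1 w < dd \<and> t * nrm W 1 w < dl"
    proof -
      have lim: "((\<lambda>t. t * a) \<longlongrightarrow> 0) (at_right (0::real))" for a :: real
        by (rule tendsto_eq_intros | simp)+
      have e1: "\<forall>\<^sub>F t in at_right (0::real). t \<in> {0<..<1}" by (rule eventually_at_right_real) simp
      have e2: "\<forall>\<^sub>F t in at_right (0::real). t * norm w < dc" using order_tendstoD(2)[OF lim dc(1)] .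
      have e3: "\<forall>\<^sub>F t in at_right (0::real). t * nrm W 1 w < dd" using order_tendstoD(2)[OF lim dd(1)] .
      have e4: "\<forall>\<^sub>F t in at_right (0::real). t * nrm W 1 w < dl" using order_tendstoD(2)[OF lim dl(1)] .
      show ?thesis using e1 e2 e3 e4 by eventually_elim auto
    qed
    obtain t where t: "t > 0" "t * norm w < dc" "t * nrm W 1 w < dd" "t * nrm W 1 w < dl"
      using eventually_happens[OF ev] by auto
    have tw1: "t *\<^sub>R w \<in> lev W 1" using nl_scale[OF NW w] .
    have ntw: "nrm W 1 (t *\<^sub>R w) = t * nrm W 1 w" using nl_hom[OF NW w, of t] t by simp
    have U1: "(0, t *\<^sub>R w) \<in> U 1"
    proof -
      have "(0, t *\<^sub>R w) \<in> (quadrant J \<times> UNIV) \<inter> lev ?E 1" using tw1 by (auto simp: quadrant_def)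
      moreover have "nrm ?E 1 ((0, t *\<^sub>R w) - 0) < dl" using nrmE_0w[OF tw1] ntw t(4) by simp
      ultimately show ?thesis using dl(2) by blast
    qed
    have U0: "(0, t *\<^sub>R w) \<in> U 0" using U1 germ_U_mono[OF GN, of 0 1] by auto
    have U00: "(0, 0) \<in> U 0" using germ_U_0[OF GN, of 0] by (simp add: zero_prod_def)
    have A: "norm (t *\<^sub>R w - snd (g (0, t *\<^sub>R w) - g (0, 0))) \<le> e * (t * norm w)"
    proof -
      have "norm ((t *\<^sub>R w - snd (g (0, t *\<^sub>R w) - g (0, 0))) - (0 - snd (g (0, 0) - g (0, 0)))) \<le> e * norm (t *\<^sub>R w - 0)"
        using dc(2)[rule_format, of 0 "t *\<^sub>R w" 0] U0 U00 dc(1) t(1,2) by simp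
      then show ?thesis using t(1) by simp
    qed
    have B: "norm (snd (g (0, t *\<^sub>R w) - g (0, 0)) - snd (L (0, t *\<^sub>R w))) \<le> e * (t * nrm W 1 w)"
    proof -
      have "nrm ?F 0 (g (0 + (0, t *\<^sub>R w)) - g 0 - L (0, t *\<^sub>R w)) \<le> e * nrm ?E 1 (0, t *\<^sub>R w)"
        using dd(2)[rule_format, of "(0, t *\<^sub>R w)"] U1 nrmE_0w[OF tw1] ntw t(3) by simp
      then have "norm (snd (g (0, t *\<^sub>R w) - g 0 - L (0, t *\<^sub>R w))) \<le> e * (t * nrm W 1 w)"
        using nrmF0_snd[of "g (0, t *\<^sub>R w) - g 0 - L (0, t *\<^sub>R w)"] nrmE_0w[OF tw1] ntw by simp
      then show ?thesis by (simp add: zero_prod_def)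
    qed
    have Ls: "snd (L (0, t *\<^sub>R w)) = t *\<^sub>R snd (L (0, w))"
      using L_scale[of t "(0, w)"] by simp
    have "t * norm (w - snd (L (0, w))) = norm (t *\<^sub>R w - snd (L (0, t *\<^sub>R w)))"
      using t(1) unfolding Ls by (simp add: scaleR_diff_right[symmetric])
    also have "\<dots> \<le> norm (t *\<^sub>R w - snd (g (0, t *\<^sub>R w) - g (0, 0))) + norm (snd (g (0, t *\<^sub>R w) - g (0, 0)) - snd (L (0, t *\<^sub>R w)))"
      by (rule norm_diff_triangle_ineq[THEN order_trans[rotated]]) simp
    also have "\<dots> \<le> e * (t * norm w) + e * (t * nrm W 1 w)" using A B by simp
    also have "\<dots> = t * (e * (norm w + nrm W 1 w))" by (simp add: algebra_simps)
    finally show ?thesis using t(1) by simp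
  qed
  have Lid1': "norm (w - snd (L (0, w))) \<le> 0" if w: "w \<in> lev W 1" for w
  proof (rule le0_by_eps)
    fix e :: real assume e: "e > 0"
    have nn: "0 \<le> norm w + nrm W 1 w" using nl_nonneg[OF NW w] by simp
    have "norm (w - snd (L (0, w))) \<le> min e (1/2) * (norm w + nrm W 1 w)"
      using Lid1[OF w, of "min e (1/2)"] e by simp
    also have "\<dots> \<le> e * (norm w + nrm W 1 w)" using nn by (intro mult_right_mono) auto
    finally show "norm (w - snd (L (0, w))) \<le> e * (norm w + nrm W 1 w)" .
  qed
  have Lid: "snd (L (0, w)) = w" for w
  proof -
    have "norm (w - snd (L (0, w))) \<le> 0"
    proof (rule le0_by_eps)
      fix e :: real assume e: "e > 0"
      have "\<forall>x\<in>lev W 0. \<forall>e>0. \<exists>y\<in>lev W (Suc 0). nrm W 0 (x - y) < e"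
        using scb_dense[OF SB] unfolding dense_sc_def by blast
      then have "\<exists>y\<in>lev W (Suc 0). nrm W 0 (w - y) < e" using e scb_lev0[OF SB] by blast
      then obtain y where y: "y \<in> lev W 1" "norm (w - y) < e" by (auto simp: scb_nrm0[OF SB])
      have y0: "snd (L (0, y)) = y" using Lid1'[OF y(1)] by simp
      have "w - snd (L (0, w)) = (w - y) + snd (L (0, y - w))"
        using L_add[of "(0, y - w)" "(0, w)"] y0 by (simp add: algebra_simps)
      then have "norm (w - snd (L (0, w))) \<le> norm (w - y) + norm (snd (L (0, y - w)))"
        using norm_triangle_ineq[of "w - y" "snd (L (0, y - w))"] by (simp only:)
      also have "norm (snd (L (0, y - w))) \<le> B0 * norm (y - w)"
      proof -
        have "norm (snd (L (0, y - w))) \<le> nrm ?F 0 (L (0, y - w))" by (rule nrmF0_snd)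
        also have "\<dots> \<le> B0 * nrm ?E 0 (0, y - w)" using B0(2) lev0E by blast
        also have "nrm ?E 0 (0, y - w) = norm (y - w)" using nrmE_0w[of "y - w" 0] by (simp add: scb_nrm0[OF SB] scb_lev0[OF SB])
        finally show ?thesis .
      qed
      also have "norm (y - w) = norm (w - y)" by (rule norm_minus_commute)
      finally have "norm (w - snd (L (0, w))) \<le> (1 + B0) * norm (w - y)" by (simp add: algebra_simps)
      also have "\<dots> \<le> (1 + B0) * e" using y(2) B0(1) by (intro mult_left_mono) auto
      finally show "norm (w - snd (L (0, w))) \<le> e * (1 + B0)" by (simp add: algebra_simps)
    qed
    then show ?thesis by simp
  qed
  define c where "c w = fst (L (0, w))" for w
  define l where "l x = L (fst x, 0)" for x :: "(real ^ 'n) \<times> 'w"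
  define s where "s x = g 0 + l x" for x
  define Lam :: "(real ^ 'n) \<times> 'w \<Rightarrow> (real ^ 'N) \<times> 'w" where "Lam = (\<lambda>x. (c (snd x), snd x))"
  have linc: "linear c" unfolding c_def
    by (rule linearI) (simp_all add: L_add[of "(0, _)" "(0, _)", simplified] L_scale[of _ "(0, _)", simplified])
  have linl: "linear l" unfolding l_def
    by (rule linearI) (simp_all add: L_add[of "(_, 0)" "(_, 0)", simplified] L_scale[of _ "(_, 0)", simplified])
  have LamEq: "Lam x = L x - l x" for x
  proof -
    have "L x = L (fst x, 0) + L (0, snd x)" using L_add[of "(fst x, 0)" "(0, snd x)"] by simp
    moreover have "L (0, snd x) = (c (snd x), snd x)" unfolding c_def using Lid[of "snd x"] by (simp add: prod_eq_iff)
    ultimately show ?thesis unfolding Lam_def l_def by simp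
  qed
  have l0: "l 0 = 0" using linear_0[OF linl] .
  have llev: "l x \<in> lev ?F m" for x m using Llev[of "(fst x, 0)" m] nl_zero[OF NW] unfolding l_def by simp
  have lbd: "\<exists>B\<ge>0. \<forall>x\<in>lev ?E m. nrm ?F k (l x) \<le> B * nrm ?E m x" if "m \<le> k" for m k
  proof -
    obtain B where B: "B \<ge> 0" "\<forall>h\<in>lev ?E k. nrm ?F k (L h) \<le> B * nrm ?E k h" using Lbd[of k] by blast
    show ?thesis
    proof (intro exI[of _ B] conjI ballI)
      show "B \<ge> 0" by (rule B(1))
      fix x assume x: "x \<in> lev ?E m"
      have "nrm ?F k (l x) \<le> B * nrm ?E k (fst x, 0)" unfolding l_def using B(2) nl_zero[OF NW] by simp
      also have "\<dots> = B * norm (fst x)" by (simp add: nrmE_v0)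
      also have "\<dots> \<le> B * nrm ?E m x"
        using sq2[of "norm (fst x)" "nrm W m (snd x)"] B(1) by (intro mult_left_mono) (auto simp: nrm_prod)
      finally show "nrm ?F k (l x) \<le> B * nrm ?E m x" .
    qed
  qed
  have s_def': "s = (\<lambda>x. g 0 + l x)" unfolding s_def by auto
  have splus: "sc_plus ?E ?F U s"
    unfolding sc_plus_def
  proof (intro conjI allI)
    show "sc_smooth ?E ?F U s" unfolding s_def'
      using affine_smooth[OF SB GN NF g0lev linl llev] lbd by blast
    show "sc_smooth ?E (shift_scale ?F) U s" unfolding s_def'
      using affine_smooth[OF SB GN normlike_shift[OF NF], of "g 0" l] g0lev linl llev lbd by auto
    fix m show "s ` U m \<subseteq> lev ?F (Suc m)"
      unfolding s_def using g0lev llev nl_add[OF NF] by blast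
  qed
  have s0: "s 0 = g 0" unfolding s_def using l0 by simp
  have LamD: "sc_deriv ?E ?F U (\<lambda>x. g x - s x) 0 Lam"
    unfolding sc_deriv_def
  proof (intro conjI ballI allI impI)
    fix h show "Lam h \<in> lev ?F 0" using lev0F by simp
  next
    fix h1 h2 :: "(real ^ 'n) \<times> 'w" and r :: real
    show "Lam (h1 + h2) = Lam h1 + Lam h2" unfolding LamEq by (simp add: L_add linear_add[OF linl])
    show "Lam (r *\<^sub>R h1) = r *\<^sub>R Lam h1" unfolding LamEq by (simp add: L_scale linear_scale[OF linl] scaleR_diff_right)
  next
    obtain B where B: "B \<ge> 0" "\<forall>x\<in>lev ?E 0. nrm ?F 0 (l x) \<le> B * nrm ?E 0 x" using lbd[of 0 0] by auto
    show "\<exists>B. \<forall>h\<in>lev ?E 0. nrm ?F 0 (Lam h) \<le> B * nrm ?E 0 h"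
    proof (intro exI[of _ "B0 + B"] ballI)
      fix h :: "(real ^ 'n) \<times> 'w" assume h: "h \<in> lev ?E 0"
      have "nrm ?F 0 (Lam h) \<le> nrm ?F 0 (L h) + nrm ?F 0 (l h)"
        unfolding LamEq using nl_tri_diff[OF NF] lev0F by simp
      also have "\<dots> \<le> B0 * nrm ?E 0 h + B * nrm ?E 0 h" using B0(2) B(2) h by (intro add_mono) auto
      finally show "nrm ?F 0 (Lam h) \<le> (B0 + B) * nrm ?E 0 h" by (simp add: algebra_simps)
    qed
  next
    fix e :: real assume e: "e > 0"
    obtain d where d: "d > 0" "\<forall>h. 0 + h \<in> U 1 \<and> nrm ?E 1 h < d \<longrightarrow> nrm ?F 0 (g (0 + h) - g 0 - L h) \<le> e * nrm ?E 1 h"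
      using sc_derivD(5)[OF LD e] by blast
    show "\<exists>d>0. \<forall>h. 0 + h \<in> U 1 \<and> nrm ?E 1 h < d \<longrightarrow>
        nrm ?F 0 ((g (0 + h) - s (0 + h)) - (g 0 - s 0) - Lam h) \<le> e * nrm ?E 1 h"
    proof (intro exI[of _ d] conjI allI impI)
      show "d > 0" by (rule d(1))
      fix h assume h: "0 + h \<in> U 1 \<and> nrm ?E 1 h < d"
      have eq: "(g (0 + h) - s (0 + h)) - (g 0 - s 0) - Lam h = g (0 + h) - g 0 - L h"
        unfolding LamEq s0 by (simp add: s_def)
      have "nrm ?F 0 (g (0 + h) - g 0 - L h) \<le> e * nrm ?E 1 h" using d(2) h by blast
      then show "nrm ?F 0 ((g (0 + h) - s (0 + h)) - (g 0 - s 0) - Lam h) \<le> e * nrm ?E 1 h"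
        unfolding eq .
    qed
  qed
  have cb: "norm (c w) \<le> B0 * norm w" for w
  proof -
    have "norm (c w) \<le> nrm ?F 0 (L (0, w))" unfolding c_def by (rule nrmF0_fst)
    also have "\<dots> \<le> B0 * nrm ?E 0 (0, w)" using B0(2) lev0E by blast
    also have "\<dots> = B0 * norm w" using nrmE_0w[of w 0] by (simp add: scb_nrm0[OF SB] scb_lev0[OF SB])
    finally show ?thesis .
  qed
  have FR: "sc_fredholm_index ?E ?F Lam (int CARD('n) - int CARD('N))"
    unfolding Lam_def by (rule fredholm_part[OF SB linc cb B0(1)])
  show ?thesis
    unfolding lin_fredholm_index_def
    by (intro exI[of _ s] exI[of _ Lam] conjI splus s0 LamD FR)
qed

end
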